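(* Let $m\ge1$, $\vec t=(t_1,\dots,t_m)$ with $t_1<\cdots<t_m$ real, and $\omega_0,\dots,\omega_m$ real with $\sum_{k=0}^\ell\omega_k\ge0$ for $\ell=0,\dots,m$, such that $w(x;\vec t)={\rm e}^{-x^2}\big(\omega_0+\sum_{k=1}^m\omega_k\theta(x-t_k)\big)$ is not identically zero. With $\mathcal L=\sum_{k=1}^m\partial/\partial t_k$ and $R_{n,k},r_{n,k}$ as in the context, for $n\ge1$ and $k=1,\dots,m$, $$\mathcal LR_{n,k}=\Big(\sum_{j=1}^mR_{n,j}-2t_k\Big)R_{n,k}+4r_{n,k},$$ and, where $R_{n,k}\ne0$, $$\mathcal Lr_{n,k}=\frac{2r_{n,k}^2}{R_{n,k}}-\Big(\sum_{j=1}^mr_{n,j}+n\Big)R_{n,k}.$$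
   Context: $\theta(y)=1$ for $y>0$ and $0$ otherwise. $P_n(z;\vec t)$ is the monic degree-$n$ polynomial orthogonal w.r.t. $w(\cdot;\vec t)$ on $\mathbb{R}$, $\int P_jP_kw\,dx=h_k\delta_{jk}$, $h_k>0$. For $k=1,\dots,m$: $R_{n,k}(\vec t):=\omega_k{\rm e}^{-t_k^2}P_n(t_k;\vec t)^2/h_n$ and $r_{n,k}(\vec t):=\omega_k{\rm e}^{-t_k^2}P_n(t_k;\vec t)P_{n-1}(t_k;\vec t)/h_{n-1}$. *)

theory Defs
  imports "HOL-Analysis.Analysis" "HOL-Computational_Algebra.Polynomial"
begin

definition theta :: "real \<Rightarrow> real" where
  "theta y = (if y > 0 then 1 else 0)"

text \<open>The weight w(x; t) = exp(-x^2) (omega_0 + sum_{k=1..m} omega_k theta(x - t_k)).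
  omega is indexed by 0..m, t by 1..m (other values are irrelevant).\<close>
definition weight :: "nat \<Rightarrow> (nat \<Rightarrow> real) \<Rightarrow> (nat \<Rightarrow> real) \<Rightarrow> real \<Rightarrow> real" where
  "weight m \<omega> t x = exp (- (x^2)) * (\<omega> 0 + (\<Sum>k=1..m. \<omega> k * theta (x - t k)))"

definition wip :: "nat \<Rightarrow> (nat \<Rightarrow> real) \<Rightarrow> (nat \<Rightarrow> real) \<Rightarrow> real poly \<Rightarrow> real poly \<Rightarrow> real" where
  "wip m \<omega> t p q = (LINT x|lborel. poly p x * poly q x * weight m \<omega> t x)"

definition OP :: "nat \<Rightarrow> (nat \<Rightarrow> real) \<Rightarrow> (nat \<Rightarrow> real) \<Rightarrow> nat \<Rightarrow> real poly" where
  "OP m \<omega> t n = (THE p. degree p = n \<and> lead_coeff p = 1 \<and>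
       (\<forall>q. degree q < n \<longrightarrow> wip m \<omega> t p q = 0))"

definition hn :: "nat \<Rightarrow> (nat \<Rightarrow> real) \<Rightarrow> (nat \<Rightarrow> real) \<Rightarrow> nat \<Rightarrow> real" where
  "hn m \<omega> t n = wip m \<omega> t (OP m \<omega> t n) (OP m \<omega> t n)"

definition Rnk :: "nat \<Rightarrow> (nat \<Rightarrow> real) \<Rightarrow> (nat \<Rightarrow> real) \<Rightarrow> nat \<Rightarrow> nat \<Rightarrow> real" where
  "Rnk m \<omega> t n k = \<omega> k * exp (- ((t k)^2)) * (poly (OP m \<omega> t n) (t k))^2 / hn m \<omega> t n"

definition rnk :: "nat \<Rightarrow> (nat \<Rightarrow> real) \<Rightarrow> (nat \<Rightarrow> real) \<Rightarrow> nat \<Rightarrow> nat \<Rightarrow> real" where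
  "rnk m \<omega> t n k = \<omega> k * exp (- ((t k)^2)) * poly (OP m \<omega> t n) (t k)
      * poly (OP m \<omega> t (n - 1)) (t k) / hn m \<omega> t (n - 1)"

end

theory Submission
  imports Defs "HOL-Probability.Distributions" "HOL-Real_Asymp.Real_Asymp"
begin


lemma int_gauss_mon: "integrable lborel (\<lambda>x::real. x^i * exp (-(x^2)))"
proof -
  define \<sigma> :: real where "\<sigma> = 1 / sqrt 2"
  have s: "\<sigma> > 0" by (simp add: \<sigma>_def)
  have "integrable lborel (\<lambda>x. sqrt pi * (normal_density 0 \<sigma> x * (x - 0)^i))"
    using integrable_normal_moment[OF s, of 0 i] by (rule integrable_mult_right)
  moreover have "(\<lambda>x. sqrt pi * (normal_density 0 \<sigma> x * (x - 0)^i)) = (\<lambda>x::real. x^i * exp (-(x^2)))"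
    by (auto simp: fun_eq_iff normal_density_def \<sigma>_def real_sqrt_mult power_divide)
  ultimately show ?thesis by metis
qed

lemma int_gauss_poly: "integrable lborel (\<lambda>x::real. poly f x * exp (-(x^2)))"
proof -
  have "integrable lborel (\<lambda>x::real. \<Sum>i\<le>degree f. coeff f i * (x^i * exp (-(x^2))))"
    using int_gauss_mon by auto
  moreover have "(\<lambda>x::real. \<Sum>i\<le>degree f. coeff f i * (x^i * exp (-(x^2)))) = (\<lambda>x::real. poly f x * exp (-(x^2)))"
    by (auto simp: fun_eq_iff poly_altdef sum_distrib_right mult.assoc)
  ultimately show ?thesis by simp
qed

definition G :: "real poly \<Rightarrow> real" where
  "G f = (LINT x|lborel. poly f x * exp (-(x^2)))"
definition H :: "real poly \<Rightarrow> real \<Rightarrow> real" where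
  "H f a = (LINT x|lborel. indicator {a<..} x * (poly f x * exp (-(x^2))))"

lemma int_gauss_poly_ind: "integrable lborel (\<lambda>x::real. indicator {a<..} x * (poly f x * exp (-(x^2))))"
proof -
  have "integrable lborel (\<lambda>x. indicator {a<..} x *\<^sub>R (poly f x * exp (-(x^2))))"
    by (rule integrable_mult_indicator) (auto intro: int_gauss_poly)
  then show ?thesis by simp
qed

lemma theta_ind: "theta (x - a) = indicator {a<..} x"
  by (simp add: theta_def indicator_def)

lemma weight_expand: "poly f x * weight m \<omega> t x = \<omega> 0 * (poly f x * exp (-(x^2)))
   + (\<Sum>k=1..m. \<omega> k * (indicator {t k<..} x * (poly f x * exp (-(x^2)))))"
  unfolding weight_def theta_ind by (simp only: sum_distrib_left distrib_left mult_ac)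

definition Lf :: "nat \<Rightarrow> (nat\<Rightarrow>real) \<Rightarrow> (nat\<Rightarrow>real) \<Rightarrow> real poly \<Rightarrow> real" where
  "Lf m \<omega> t f = (LINT x|lborel. poly f x * weight m \<omega> t x)"

lemma int_weight: "integrable lborel (\<lambda>x. poly f x * weight m \<omega> t x)"
  unfolding weight_expand using int_gauss_poly int_gauss_poly_ind by auto

lemma Lf_expand: "Lf m \<omega> t f = \<omega> 0 * G f + (\<Sum>k=1..m. \<omega> k * H f (t k))"
  unfolding Lf_def weight_expand G_def H_def
  using int_gauss_poly int_gauss_poly_ind by (simp add: integral_sum)

lemma G_add: "G (f + g) = G f + G g"
  unfolding G_def using int_gauss_poly by (simp add: distrib_right)
lemma G_smult: "G (smult c f) = c * G f"
  unfolding G_def by (simp add: mult.assoc)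
lemma H_add: "H (f + g) a = H f a + H g a"
  unfolding H_def using int_gauss_poly_ind by (simp add: distrib_right distrib_left)
lemma H_smult: "H (smult c f) a = c * H f a"
  unfolding H_def by (simp add: mult.assoc mult.left_commute)

lemma Lf_add: "Lf m \<omega> t (f + g) = Lf m \<omega> t f + Lf m \<omega> t g"
  unfolding Lf_expand G_add H_add by (simp add: algebra_simps sum.distrib)
lemma Lf_smult: "Lf m \<omega> t (smult c f) = c * Lf m \<omega> t f"
  unfolding Lf_expand G_smult H_smult by (simp add: algebra_simps sum_distrib_left)
lemma Lf_0[simp]: "Lf m \<omega> t 0 = 0"
  using Lf_smult[of m \<omega> t 0 0] by simp
lemma Lf_uminus: "Lf m \<omega> t (- f) = - Lf m \<omega> t f"
  using Lf_smult[of m \<omega> t "-1" f] by simp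
lemma Lf_diff: "Lf m \<omega> t (f - g) = Lf m \<omega> t f - Lf m \<omega> t g"
  using Lf_add[of m \<omega> t f "-g"] Lf_uminus[of m \<omega> t g] by simp
lemma Lf_sum: "Lf m \<omega> t (\<Sum>i\<in>S. F i) = (\<Sum>i\<in>S. Lf m \<omega> t (F i))"
  by (induction S rule: infinite_finite_induct) (auto simp: Lf_add)

lemma wip_Lf: "wip m \<omega> t p q = Lf m \<omega> t (p * q)"
  by (simp add: wip_def Lf_def)

lemma Lf_moments: "degree f \<le> N \<Longrightarrow> Lf m \<omega> t f = (\<Sum>i\<le>N. coeff f i * Lf m \<omega> t (monom 1 i))"
proof -
  assume "degree f \<le> N"
  then have "f = (\<Sum>i\<le>N. smult (coeff f i) (monom 1 i))"
    using poly_as_sum_of_monoms'[of f N] by (simp add: smult_monom)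
  then have "Lf m \<omega> t f = Lf m \<omega> t (\<Sum>i\<le>N. smult (coeff f i) (monom 1 i))" by simp
  also have "\<dots> = (\<Sum>i\<le>N. coeff f i * Lf m \<omega> t (monom 1 i))" by (simp add: Lf_sum Lf_smult)
  finally show ?thesis .
qed

lemma poly_bound: "degree f \<le> N \<Longrightarrow> poly f (x::real) = (\<Sum>i\<le>N. coeff f i * x^i)"
proof -
  assume "degree f \<le> N"
  then have "f = (\<Sum>i\<le>N. monom (coeff f i) i)"
    using poly_as_sum_of_monoms'[of f N] by simp
  then have "poly f x = poly (\<Sum>i\<le>N. monom (coeff f i) i) x" by simp
  also have "\<dots> = (\<Sum>i\<le>N. coeff f i * x^i)" by (simp add: poly_sum poly_monom)
  finally show ?thesis .
qed

lemma set_int_gp: "set_integrable lborel A (\<lambda>x. poly (f::real poly) x * exp (-(x^2)))" if "A \<in> sets lborel"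
  unfolding set_integrable_def by (rule integrable_mult_indicator[OF that int_gauss_poly[of f]])

lemma H_LBINT: "H f a = (LBINT x=ereal a..\<infinity>. poly f x * exp (-(x^2)))"
  unfolding interval_integral_to_infinity_eq H_def set_lebesgue_integral_def by simp

lemma H_split: "H f a = H f a0 - (LBINT x=ereal a0..ereal a. poly f x * exp (-(x^2)))"
proof -
  have "(LBINT x=ereal a0..ereal a. poly f x * exp (-(x^2))) + (LBINT x=ereal a..\<infinity>. poly f x * exp (-(x^2)))
     = (LBINT x=ereal a0..\<infinity>. poly f x * exp (-(x^2)))"
    by (rule interval_integral_sum) (auto simp: interval_lebesgue_integrable_def intro!: set_int_gp)
  then show ?thesis unfolding H_LBINT by simp
qed

lemma H_deriv: "(H f has_real_derivative (- (poly f a0 * exp (-(a0^2))))) (at a0)"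
proof -
  have c: "continuous_on {a0-1..a0+1} (\<lambda>x. poly f x * exp (-(x^2)))"
    by (intro continuous_intros)
  have d1: "((\<lambda>u. LBINT y=a0..u. poly f y * exp (-(y^2))) has_vector_derivative (poly f a0 * exp (-(a0^2)))) (at a0 within {a0-1..a0+1})"
    by (rule interval_integral_FTC2[OF _ _ c]) auto
  have e: "at a0 within {a0-1..a0+1} = at a0" by (rule at_within_Icc_at) auto
  have d2: "((\<lambda>u. LBINT y=a0..u. poly f y * exp (-(y^2))) has_real_derivative (poly f a0 * exp (-(a0^2)))) (at a0)"
    using d1 unfolding e has_real_derivative_iff_has_vector_derivative .
  have d3: "((\<lambda>u. H f a0 - (LBINT y=a0..u. poly f y * exp (-(y^2)))) has_real_derivative (0 - poly f a0 * exp (-(a0^2)))) (at a0)"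
    by (rule DERIV_diff[OF DERIV_const d2])
  have eq: "(\<lambda>u. H f a0 - (LBINT y=a0..u. poly f y * exp (-(y^2)))) = H f"
    by (rule ext) (rule H_split[symmetric])
  show ?thesis using d3 unfolding eq by simp
qed

lemma gp_lim_top: "((\<lambda>x::real. poly f x * exp (-(x^2))) \<longlongrightarrow> 0) at_top"
proof -
  have "((\<lambda>x::real. \<Sum>i\<le>degree f. coeff f i * (x^i * exp (-(x^2)))) \<longlongrightarrow> (\<Sum>i\<le>degree f. coeff f i * 0)) at_top"
    by (intro tendsto_intros) real_asymp
  then show ?thesis by (simp add: poly_altdef sum_distrib_right mult.assoc)
qed

lemma gp_lim_bot: "((\<lambda>x::real. poly f x * exp (-(x^2))) \<longlongrightarrow> 0) at_bot"
proof -
  have "((\<lambda>x::real. \<Sum>i\<le>degree f. coeff f i * (x^i * exp (-(x^2)))) \<longlongrightarrow> (\<Sum>i\<le>degree f. coeff f i * 0)) at_bot"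
    by (intro tendsto_intros) real_asymp
  then show ?thesis by (simp add: poly_altdef sum_distrib_right mult.assoc)
qed

definition ibp :: "real poly \<Rightarrow> real poly" where
  "ibp f = pderiv f - smult 2 ([:0,1:] * f)"

lemma ibp_deriv: "((\<lambda>x. poly f x * exp (-(x^2))) has_vector_derivative (poly (ibp f) x * exp (-(x^2)))) (at x)"
proof -
  have "((\<lambda>x. poly f x * exp (-(x^2))) has_real_derivative (poly (pderiv f) x * exp (-(x^2)) + poly f x * (exp (-(x^2)) * (- (2 * x))))) (at x)"
    by (auto intro!: derivative_eq_intros poly_DERIV simp: power2_eq_square)
  then show ?thesis
    by (simp add: has_real_derivative_iff_has_vector_derivative ibp_def algebra_simps)
qed

lemma H_ibp: "H (ibp f) a = - (poly f a * exp (-(a^2)))"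
proof -
  have "(LBINT x=ereal a..\<infinity>. poly (ibp f) x * exp (-(x^2))) = 0 - poly f a * exp (-(a^2))"
  proof (rule interval_integral_FTC_integrable[where F="\<lambda>x. poly f x * exp (-(x^2))"])
    show "set_integrable lborel (einterval (ereal a) \<infinity>) (\<lambda>x. poly (ibp f) x * exp (-(x^2)))"
      by (rule set_int_gp) simp
    show "(((\<lambda>x. poly f x * exp (-(x^2))) \<circ> real_of_ereal) \<longlongrightarrow> poly f a * exp (-(a^2))) (at_right (ereal a))"
    proof -
      have "isCont (\<lambda>x. poly f x * exp (-(x^2))) a" by (intro continuous_intros)
      then show ?thesis unfolding ereal_tendsto_simps1 isCont_def
        by (rule tendsto_mono[OF at_le[OF subset_UNIV]])
    qed
    show "(((\<lambda>x. poly f x * exp (-(x^2))) \<circ> real_of_ereal) \<longlongrightarrow> 0) (at_left \<infinity>)"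
      unfolding ereal_tendsto_simps1 by (rule gp_lim_top)
  qed (auto intro!: ibp_deriv continuous_intros)
  then show ?thesis unfolding H_LBINT by simp
qed

lemma G_ibp: "G (ibp f) = 0"
proof -
  have "(LBINT x=-\<infinity>..\<infinity>. poly (ibp f) x * exp (-(x^2))) = 0 - 0"
  proof (rule interval_integral_FTC_integrable[where F="\<lambda>x. poly f x * exp (-(x^2))"])
    show "set_integrable lborel (einterval (-\<infinity>) \<infinity>) (\<lambda>x. poly (ibp f) x * exp (-(x^2)))"
      by (rule set_int_gp) simp
    show "(((\<lambda>x. poly f x * exp (-(x^2))) \<circ> real_of_ereal) \<longlongrightarrow> 0) (at_right (-\<infinity>))"
      unfolding ereal_tendsto_simps1 by (rule gp_lim_bot)
    show "(((\<lambda>x. poly f x * exp (-(x^2))) \<circ> real_of_ereal) \<longlongrightarrow> 0) (at_left \<infinity>)"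
      unfolding ereal_tendsto_simps1 by (rule gp_lim_top)
  qed (auto intro!: ibp_deriv continuous_intros)
  then show ?thesis unfolding G_def interval_lebesgue_integral_def set_lebesgue_integral_def by simp
qed

lemma Lf_ibp: "Lf m \<omega> t (ibp f) = - (\<Sum>k=1..m. \<omega> k * (poly f (t k) * exp (-((t k)^2))))"
  unfolding Lf_expand G_ibp H_ibp by (simp add: sum_negf)


definition ordered :: "nat \<Rightarrow> (nat \<Rightarrow> real) \<Rightarrow> bool" where
  "ordered m t \<longleftrightarrow> (\<forall>i j. 1 \<le> i \<longrightarrow> i < j \<longrightarrow> j \<le> m \<longrightarrow> t i < t j)"
definition psum :: "nat \<Rightarrow> (nat \<Rightarrow> real) \<Rightarrow> bool" where
  "psum m \<omega> \<longleftrightarrow> (\<forall>l\<le>m. (\<Sum>k=0..l. \<omega> k) \<ge> 0)"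
definition good :: "nat \<Rightarrow> (nat \<Rightarrow> real) \<Rightarrow> (nat \<Rightarrow> real) \<Rightarrow> bool" where
  "good m \<omega> t \<longleftrightarrow> ordered m t \<and> (\<exists>x. weight m \<omega> t x \<noteq> 0)"
definition st :: "nat \<Rightarrow> (nat \<Rightarrow> real) \<Rightarrow> (nat \<Rightarrow> real) \<Rightarrow> real \<Rightarrow> real" where
  "st m \<omega> t x = \<omega> 0 + (\<Sum>k=1..m. \<omega> k * theta (x - t k))"

lemma weight_st: "weight m \<omega> t x = exp (-(x^2)) * st m \<omega> t x"
  by (simp add: weight_def st_def)

lemma st_nonneg:
  assumes "ordered m t" "psum m \<omega>"
  shows "st m \<omega> t x \<ge> 0"
proof -
  define S where "S = {k\<in>{1..m}. t k < x}"
  have fin: "finite S" by (simp add: S_def)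
  have sum_eq: "(\<Sum>k=1..m. \<omega> k * theta (x - t k)) = sum \<omega> S"
  proof -
    have "sum \<omega> S = (\<Sum>k=1..m. if t k < x then \<omega> k else 0)"
      unfolding S_def by (rule sum.inter_filter) simp
    also have "\<dots> = (\<Sum>k=1..m. \<omega> k * theta (x - t k))"
      by (rule sum.cong) (simp_all add: theta_def)
    finally show ?thesis by simp
  qed
  obtain l where l: "l \<le> m" "S = {1..l}"
  proof (cases "S = {}")
    case True then show ?thesis using that[of 0] by auto
  next
    case False
    define l where "l = Max S"
    have lS: "l \<in> S" using False fin by (simp add: l_def)
    have "S = {1..l}"
    proof
      show "S \<subseteq> {1..l}"
      proof
        fix i assume "i \<in> S"
        then have "i \<le> l" "1 \<le> i" using fin unfolding l_def by (auto simp: S_def)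
        then show "i \<in> {1..l}" by simp
      qed
      show "{1..l} \<subseteq> S"
      proof
        fix i assume i: "i \<in> {1..l}"
        show "i \<in> S"
        proof (cases "i = l")
          case True then show ?thesis using lS by simp
        next
          case False
          have lm: "l \<le> m" "t l < x" using lS unfolding S_def by auto
          have "i < l" "1 \<le> i" using False i by auto
          then have "t i < t l" using assms(1)[unfolded ordered_def, rule_format, of i l] lm by simp
          then show ?thesis using i lS unfolding S_def by auto
        qed
      qed
    qed
    moreover have "l \<le> m" using lS by (simp add: S_def)
    ultimately show ?thesis using that by blast
  qed
  have "st m \<omega> t x = \<omega> 0 + sum \<omega> {1..l}" unfolding st_def sum_eq l(2) ..
  also have "\<dots> = (\<Sum>k=0..l. \<omega> k)" by (simp add: sum.atLeast_Suc_atMost)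
  also have "\<dots> \<ge> 0" using assms(2) l(1) unfolding psum_def by auto
  finally show ?thesis .
qed

lemma weight_nonneg: "ordered m t \<Longrightarrow> psum m \<omega> \<Longrightarrow> weight m \<omega> t x \<ge> 0"
  using st_nonneg[of m t \<omega> x] by (simp add: weight_st)

lemma st_loc:
  "\<exists>\<delta>>0. \<forall>x. x0 - \<delta> < x \<and> x \<le> x0 \<longrightarrow> st m \<omega> t x = st m \<omega> t x0"
proof -
  define D where "D = insert 1 ((\<lambda>k. x0 - t k) ` {k\<in>{1..m}. t k < x0})"
  define \<delta> where "\<delta> = Min D"
  have fD: "finite D" "D \<noteq> {}" by (auto simp: D_def)
  have "\<delta> \<in> D" using fD by (simp add: \<delta>_def)
  then have dpos: "\<delta> > 0" by (auto simp: D_def)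
  have dle: "\<delta> \<le> x0 - t k" if "k\<in>{1..m}" "t k < x0" for k
    using fD that unfolding \<delta>_def by (intro Min_le) (auto simp: D_def)
  have "st m \<omega> t x = st m \<omega> t x0" if "x0 - \<delta> < x" "x \<le> x0" for x
    unfolding st_def
  proof (intro arg_cong2[where f="(+)"] refl sum.cong)
    fix k assume k: "k \<in> {1..m}"
    show "\<omega> k * theta (x - t k) = \<omega> k * theta (x0 - t k)"
    proof (cases "t k < x0")
      case True then show ?thesis using dle[OF k True] that by (simp add: theta_def)
    next
      case False then show ?thesis using that by (simp add: theta_def)
    qed
  qed
  then show ?thesis using dpos by blast
qed

lemma AE_poly_interval:
  fixes p :: "real poly"
  assumes "p \<noteq> 0" "a < b" "AE x in lborel. x \<in> {a<..<b} \<longrightarrow> poly p x = 0"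
  shows False
proof -
  have "AE x in lborel. x \<notin> {x. poly p x = 0}"
    by (rule AE_discrete_difference) (auto intro!: countable_finite poly_roots_finite[OF assms(1)])
  with assms(3) have "AE x in lborel. x \<notin> {a<..<b}" by eventually_elim auto
  then have "emeasure lborel {a<..<b} = 0"
    by (subst (asm) AE_iff_measurable[where N="{a<..<b}"]) auto
  then show False using assms(2) by simp
qed

lemma Lf_pos:
  fixes p :: "real poly"
  assumes nn: "\<And>x. weight m \<omega> t x \<ge> 0" and ab: "a < b" and pos: "\<And>x. a < x \<Longrightarrow> x < b \<Longrightarrow> weight m \<omega> t x > 0"
    and p: "p \<noteq> 0"
  shows "Lf m \<omega> t (p * p) > 0"
proof -
  have int: "integrable lborel (\<lambda>x. poly (p*p) x * weight m \<omega> t x)" by (rule int_weight)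
  have nn2: "\<And>x. 0 \<le> poly (p*p) x * weight m \<omega> t x" using nn by simp
  have ge: "Lf m \<omega> t (p * p) \<ge> 0" unfolding Lf_def using nn2 by (intro integral_nonneg_AE AE_I2) simp
  have "Lf m \<omega> t (p * p) \<noteq> 0"
  proof
    assume "Lf m \<omega> t (p * p) = 0"
    then have "AE x in lborel. poly (p*p) x * weight m \<omega> t x = 0"
      unfolding Lf_def using integral_nonneg_eq_0_iff_AE[OF int] nn2 by simp
    then have "AE x in lborel. x \<in> {a<..<b} \<longrightarrow> poly p x = 0"
    proof (rule AE_mp, intro AE_I2 impI)
      fix x assume h: "poly (p*p) x * weight m \<omega> t x = 0" "x \<in> {a<..<b}"
      then have "weight m \<omega> t x > 0" using pos by simp
      with h(1) show "poly p x = 0" by simp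
    qed
    then show False using AE_poly_interval[OF p ab] by blast
  qed
  with ge show ?thesis by simp
qed

lemma good_interval:
  assumes "good m \<omega> t" "psum m \<omega>"
  shows "\<exists>a b. a < b \<and> (\<forall>x. a < x \<and> x < b \<longrightarrow> weight m \<omega> t x > 0)"
proof -
  obtain x0 where x0: "weight m \<omega> t x0 \<noteq> 0" using assms unfolding good_def by auto
  have ord: "ordered m t" using assms unfolding good_def by auto
  obtain \<delta> where d: "\<delta> > 0" "\<And>x. x0 - \<delta> < x \<and> x \<le> x0 \<Longrightarrow> st m \<omega> t x = st m \<omega> t x0"
    using st_loc by blast
  have "st m \<omega> t x0 \<noteq> 0" using x0 by (simp add: weight_st)
  then have sp: "st m \<omega> t x0 > 0" using st_nonneg[OF ord assms(2), of x0] by linarith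
  have "\<forall>x. x0 - \<delta> < x \<and> x < x0 \<longrightarrow> weight m \<omega> t x > 0"
  proof (intro allI impI)
    fix x assume "x0 - \<delta> < x \<and> x < x0"
    then have "st m \<omega> t x = st m \<omega> t x0" using d(2)[of x] by simp
    then show "weight m \<omega> t x > 0" using sp unfolding weight_st by simp
  qed
  then show ?thesis using d(1) by (intro exI[of _ "x0 - \<delta>"] exI[of _ x0]) auto
qed

lemma good_pos:
  fixes p :: "real poly"
  assumes "good m \<omega> t" "psum m \<omega>" "p \<noteq> 0"
  shows "Lf m \<omega> t (p * p) > 0"
proof -
  obtain a b where ab: "a < b" "\<forall>x. a < x \<and> x < b \<longrightarrow> weight m \<omega> t x > 0"
    using good_interval[OF assms(1,2)] by blast
  have ord: "ordered m t" using assms unfolding good_def by auto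
  show ?thesis
    by (rule Lf_pos[OF weight_nonneg[OF ord assms(2)] ab(1) _ assms(3)]) (use ab in auto)
qed


lemma good_ev:
  assumes g: "good m \<omega> t" and ps: "psum m \<omega>" and j: "j \<in> {1..m}"
  shows "eventually (\<lambda>s. good m \<omega> (t(j:=s))) (nhds (t j))"
proof -
  have ord: "ordered m t" using g unfolding good_def by auto
  have e1: "eventually (\<lambda>s. \<forall>i\<in>{1..m}. (i < j \<longrightarrow> t i < s) \<and> (j < i \<longrightarrow> s < t i)) (nhds (t j))"
  proof (rule eventually_ball_finite[of "{1..m}" "\<lambda>s i. (i < j \<longrightarrow> t i < s) \<and> (j < i \<longrightarrow> s < t i)"], simp, rule ballI)
    fix i assume i: "i \<in> {1..m}"
    have a: "eventually (\<lambda>s. t i < s) (nhds (t j))" if "i < j"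
    proof -
      have "t i < t j" using ord[unfolded ordered_def, rule_format, of i j] i j that by simp
      then show ?thesis by (rule order_tendstoD(1)[OF filterlim_ident])
    qed
    have b: "eventually (\<lambda>s. s < t i) (nhds (t j))" if "j < i"
    proof -
      have "t j < t i" using ord[unfolded ordered_def, rule_format, of j i] i j that by simp
      then show ?thesis by (rule order_tendstoD(2)[OF filterlim_ident])
    qed
    show "eventually (\<lambda>s. (i < j \<longrightarrow> t i < s) \<and> (j < i \<longrightarrow> s < t i)) (nhds (t j))"
      using a b by (cases "i < j"; cases "j < i") (auto simp: eventually_conj_iff)
  qed
  have e1': "eventually (\<lambda>s. ordered m (t(j:=s))) (nhds (t j))"
    using e1
  proof eventually_elim
    case (elim s)
    show ?case unfolding ordered_def
    proof (intro allI impI)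
      fix a b assume ab: "1 \<le> a" "a < b" "b \<le> m"
      have o: "t a < t b" using ord[unfolded ordered_def, rule_format, of a b] ab by simp
      have ea: "a \<in> {1..m}" "b \<in> {1..m}" using ab by auto
      show "(t(j := s)) a < (t(j := s)) b"
      proof (cases "a = j")
        case True
        then have "b \<noteq> j" using ab by simp
        have "s < t b" using elim[rule_format, OF ea(2)] True ab(2) by simp
        then show ?thesis using True \<open>b \<noteq> j\<close> by simp
      next
        case False
        show ?thesis
        proof (cases "b = j")
          case True
          have "t a < s" using elim[rule_format, OF ea(1)] True ab(2) by simp
          then show ?thesis using True False by simp
        next
          case False2: False
          then show ?thesis using False o by simp
        qed
      qed
    qed
  qed
  obtain x0 where x0: "weight m \<omega> t x0 \<noteq> 0" using g unfolding good_def by auto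
  obtain \<delta> where d: "\<delta> > 0" "\<And>x. x0 - \<delta> < x \<and> x \<le> x0 \<Longrightarrow> st m \<omega> t x = st m \<omega> t x0"
    using st_loc by blast
  define x1 where "x1 = (if x0 - \<delta>/2 = t j then x0 - \<delta>/4 else x0 - \<delta>/2)"
  have x1: "x1 \<noteq> t j" "x0 - \<delta> < x1" "x1 \<le> x0" using d(1) by (auto simp: x1_def)
  have stx1: "st m \<omega> t x1 \<noteq> 0" using d(2)[of x1] x1 x0 by (simp add: weight_st)
  have e2: "eventually (\<lambda>s. theta (x1 - s) = theta (x1 - t j)) (nhds (t j))"
  proof (cases "t j < x1")
    case True
    have "eventually (\<lambda>s. s < x1) (nhds (t j))" by (rule order_tendstoD(2)[OF filterlim_ident True])
    then show ?thesis by eventually_elim (use True in \<open>simp add: theta_def\<close>)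
  next
    case False
    then have F: "x1 < t j" using x1(1) by simp
    have "eventually (\<lambda>s. x1 < s) (nhds (t j))" by (rule order_tendstoD(1)[OF filterlim_ident F])
    then show ?thesis by eventually_elim (use F in \<open>simp add: theta_def\<close>)
  qed
  have e2': "eventually (\<lambda>s. weight m \<omega> (t(j:=s)) x1 \<noteq> 0) (nhds (t j))"
    using e2
  proof eventually_elim
    case (elim s)
    have "st m \<omega> (t(j:=s)) x1 = st m \<omega> t x1"
      unfolding st_def using elim by (intro arg_cong2[where f="(+)"] refl sum.cong) auto
    then show ?case using stx1 by (simp add: weight_st)
  qed
  show ?thesis using e1' e2' unfolding good_def by eventually_elim blast
qed


fun gs :: "nat \<Rightarrow> (nat\<Rightarrow>real) \<Rightarrow> (nat\<Rightarrow>real) \<Rightarrow> nat \<Rightarrow> real poly" where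
  "gs m \<omega> t 0 = 1"
| "gs m \<omega> t (Suc N) = monom 1 (Suc N) - (\<Sum>l\<le>N. smult (Lf m \<omega> t (monom 1 (Suc N) * gs m \<omega> t l) / Lf m \<omega> t (gs m \<omega> t l * gs m \<omega> t l)) (gs m \<omega> t l))"

definition posdef :: "nat \<Rightarrow> (nat \<Rightarrow> real) \<Rightarrow> (nat \<Rightarrow> real) \<Rightarrow> bool" where
  "posdef m \<omega> t \<longleftrightarrow> (\<forall>p. p \<noteq> 0 \<longrightarrow> Lf m \<omega> t (p * p) > 0)"

lemma good_posdef: "good m \<omega> t \<Longrightarrow> psum m \<omega> \<Longrightarrow> posdef m \<omega> t"
  unfolding posdef_def using good_pos by blast

lemma gs_sum_deg: "degree (\<Sum>l\<le>N. smult (c l) (gs m \<omega> t l)) \<le> N"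
  if "\<And>l. l \<le> N \<Longrightarrow> degree (gs m \<omega> t l) = l"
proof (rule degree_sum_le)
  fix l assume "l \<in> {..N}"
  then show "degree (smult (c l) (gs m \<omega> t l)) \<le> N"
    using that[of l] degree_smult_le[of "c l" "gs m \<omega> t l"] by simp
qed simp

lemma gs_degree: "degree (gs m \<omega> t N) = N"
proof (induction N rule: less_induct)
  case (less N)
  show ?case
  proof (cases N)
    case 0 then show ?thesis by simp
  next
    case (Suc M)
    define r where "r = (\<Sum>l\<le>M. smult (Lf m \<omega> t (monom 1 (Suc M) * gs m \<omega> t l) / Lf m \<omega> t (gs m \<omega> t l * gs m \<omega> t l)) (gs m \<omega> t l))"
    have "degree r \<le> M" unfolding r_def by (rule gs_sum_deg) (use less Suc in auto)
    then have "degree (monom (1::real) (Suc M) + - r) = Suc M"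
      by (subst degree_add_eq_left) (simp_all add: degree_monom_eq)
    then show ?thesis by (simp add: Suc r_def)
  qed
qed

lemma gs_monic: "coeff (gs m \<omega> t N) N = 1"
proof (cases N)
  case 0 then show ?thesis by simp
next
  case (Suc M)
  define r where "r = (\<Sum>l\<le>M. smult (Lf m \<omega> t (monom 1 (Suc M) * gs m \<omega> t l) / Lf m \<omega> t (gs m \<omega> t l * gs m \<omega> t l)) (gs m \<omega> t l))"
  have "degree r \<le> M" unfolding r_def by (rule gs_sum_deg) (simp add: gs_degree)
  then have "coeff r (Suc M) = 0" by (simp add: coeff_eq_0)
  then show ?thesis by (simp add: Suc r_def[symmetric])
qed

lemma gs_ne0: "gs m \<omega> t N \<noteq> 0"
  using gs_monic[of m \<omega> t N] by auto

lemma gs_coeff_high: "N < i \<Longrightarrow> coeff (gs m \<omega> t N) i = 0"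
  by (simp add: coeff_eq_0 gs_degree)

lemma Lf_comm: "Lf m \<omega> t (p * q) = Lf m \<omega> t (q * p)"
  by (simp add: mult.commute)

lemma gs_orth_pairs:
  assumes pd: "posdef m \<omega> t"
  shows "l < N \<Longrightarrow> Lf m \<omega> t (gs m \<omega> t N * gs m \<omega> t l) = 0"
proof (induction N arbitrary: l rule: less_induct)
  case (less N)
  then obtain M where N: "N = Suc M" by (cases N) auto
  let ?g = "gs m \<omega> t"
  let ?L = "Lf m \<omega> t"
  define c where "c l' = ?L (monom 1 (Suc M) * ?g l') / ?L (?g l' * ?g l')" for l'
  have off: "?L (?g l' * ?g l) = 0" if "l' \<le> M" "l' \<noteq> l" for l'
  proof (cases "l < l'")
    case True then show ?thesis using less.IH[of l' l] that N by simp
  next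
    case False
    then have "l' < l" using that by simp
    then show ?thesis using less.IH[of l l'] less.prems N by (simp add: Lf_comm)
  qed
  have lM: "l \<le> M" using less.prems N by simp
  have nz: "?L (?g l * ?g l) \<noteq> 0" using pd gs_ne0[of m \<omega> t l] unfolding posdef_def by force
  have "?L (?g N * ?g l) = ?L (monom 1 (Suc M) * ?g l) - (\<Sum>l'\<le>M. c l' * ?L (?g l' * ?g l))"
    by (simp add: N c_def[symmetric] left_diff_distrib sum_distrib_right Lf_diff Lf_sum Lf_smult)
  also have "(\<Sum>l'\<le>M. c l' * ?L (?g l' * ?g l)) = c l * ?L (?g l * ?g l)"
  proof -
    have "(\<Sum>l'\<le>M. c l' * ?L (?g l' * ?g l)) = c l * ?L (?g l * ?g l) + (\<Sum>l'\<in>{..M}-{l}. c l' * ?L (?g l' * ?g l))"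
      using lM by (subst sum.remove[of _ l]) auto
    also have "(\<Sum>l'\<in>{..M}-{l}. c l' * ?L (?g l' * ?g l)) = 0"
      by (rule sum.neutral) (auto simp: off)
    finally show ?thesis by simp
  qed
  also have "c l * ?L (?g l * ?g l) = ?L (monom 1 (Suc M) * ?g l)"
    using nz by (simp add: c_def)
  finally show ?case by simp
qed

lemma gs_orth:
  assumes pd: "posdef m \<omega> t" and q: "\<forall>i\<ge>N. coeff q i = 0"
  shows "Lf m \<omega> t (gs m \<omega> t N * q) = 0"
proof -
  have "\<forall>q. (\<forall>i\<ge>d. coeff q i = 0) \<longrightarrow> d \<le> N \<longrightarrow> Lf m \<omega> t (gs m \<omega> t N * q) = 0" for d
  proof (induction d)
    case 0
    show ?case
    proof (intro allI impI)
      fix q :: "real poly" assume "\<forall>i\<ge>0. coeff q i = 0"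
      then have "q = 0" by (intro poly_eqI) simp
      then show "Lf m \<omega> t (gs m \<omega> t N * q) = 0" by simp
    qed
  next
    case (Suc d)
    show ?case
    proof (intro allI impI)
      fix q :: "real poly" assume q: "\<forall>i\<ge>Suc d. coeff q i = 0" and dN: "Suc d \<le> N"
      define r where "r = q - smult (coeff q d) (gs m \<omega> t d)"
      have r: "\<forall>i\<ge>d. coeff r i = 0"
      proof (intro allI impI)
        fix i assume "d \<le> i"
        then consider "i = d" | "d < i" by linarith
        then show "coeff r i = 0"
          by cases (auto simp: r_def gs_monic gs_coeff_high q)
      qed
      have "q = smult (coeff q d) (gs m \<omega> t d) + r" by (simp add: r_def)
      then have "Lf m \<omega> t (gs m \<omega> t N * q) = coeff q d * Lf m \<omega> t (gs m \<omega> t N * gs m \<omega> t d) + Lf m \<omega> t (gs m \<omega> t N * r)"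
        by (metis Lf_add Lf_smult distrib_left mult_smult_right)
      also have "Lf m \<omega> t (gs m \<omega> t N * gs m \<omega> t d) = 0" using gs_orth_pairs[OF pd] dN by simp
      also have "Lf m \<omega> t (gs m \<omega> t N * r) = 0" using Suc.IH r dN by simp
      finally show "Lf m \<omega> t (gs m \<omega> t N * q) = 0" by simp
    qed
  qed
  then show ?thesis using q by blast
qed

lemma gs_top:
  assumes pd: "posdef m \<omega> t" and q: "\<forall>i>N. coeff q i = 0"
  shows "Lf m \<omega> t (gs m \<omega> t N * q) = coeff q N * Lf m \<omega> t (gs m \<omega> t N * gs m \<omega> t N)"
proof -
  define r where "r = q - smult (coeff q N) (gs m \<omega> t N)"
  have r: "\<forall>i\<ge>N. coeff r i = 0"
  proof (intro allI impI)
    fix i assume "N \<le> i"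
    then consider "i = N" | "N < i" by linarith
    then show "coeff r i = 0"
      by cases (auto simp: r_def gs_monic gs_coeff_high q)
  qed
  have "q = smult (coeff q N) (gs m \<omega> t N) + r" by (simp add: r_def)
  then have "Lf m \<omega> t (gs m \<omega> t N * q) = coeff q N * Lf m \<omega> t (gs m \<omega> t N * gs m \<omega> t N) + Lf m \<omega> t (gs m \<omega> t N * r)"
    by (metis Lf_add Lf_smult distrib_left mult_smult_right)
  also have "Lf m \<omega> t (gs m \<omega> t N * r) = 0" by (rule gs_orth[OF pd r])
  finally show ?thesis by simp
qed

lemma OP_gs:
  assumes pd: "posdef m \<omega> t"
  shows "OP m \<omega> t N = gs m \<omega> t N"
  unfolding OP_def
proof (rule the_equality)
  show "degree (gs m \<omega> t N) = N \<and> lead_coeff (gs m \<omega> t N) = 1 \<and> (\<forall>q. degree q < N \<longrightarrow> wip m \<omega> t (gs m \<omega> t N) q = 0)"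
    using gs_orth[OF pd] by (auto simp: gs_degree gs_monic wip_Lf coeff_eq_0)
next
  fix p assume p: "degree p = N \<and> lead_coeff p = 1 \<and> (\<forall>q. degree q < N \<longrightarrow> wip m \<omega> t p q = 0)"
  define d where "d = p - gs m \<omega> t N"
  have dc: "\<forall>i\<ge>N. coeff d i = 0"
  proof (intro allI impI)
    fix i assume "N \<le> i"
    then consider "i = N" | "N < i" by linarith
    then show "coeff d i = 0"
      by cases (use p in \<open>auto simp: d_def gs_monic gs_coeff_high coeff_eq_0\<close>)
  qed
  have "Lf m \<omega> t (p * d) = 0"
  proof (cases "d = 0")
    case False
    then have "coeff d (degree d) \<noteq> 0" by simp
    then have "degree d < N" using dc by (meson not_le)
    then show ?thesis using p by (simp add: wip_Lf)
  qed simp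
  moreover have "Lf m \<omega> t (gs m \<omega> t N * d) = 0" by (rule gs_orth[OF pd dc])
  ultimately have "Lf m \<omega> t (d * d) = 0"
    by (simp add: d_def left_diff_distrib Lf_diff)
  then have "d = 0" using pd unfolding posdef_def by force
  then show "p = gs m \<omega> t N" by (simp add: d_def)
qed

lemma hn_gs: "posdef m \<omega> t \<Longrightarrow> hn m \<omega> t N = Lf m \<omega> t (gs m \<omega> t N * gs m \<omega> t N)"
  by (simp add: hn_def OP_gs wip_Lf)

lemma hn_pos: "posdef m \<omega> t \<Longrightarrow> hn m \<omega> t N > 0"
  using gs_ne0 by (simp add: hn_gs posdef_def)


definition pd :: "(real \<Rightarrow> real poly) \<Rightarrow> real poly \<Rightarrow> real \<Rightarrow> bool" where
  "pd F dF s0 \<longleftrightarrow> (\<exists>N. (\<forall>s. degree (F s) \<le> N) \<and> degree dF \<le> N) \<and>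
     (\<forall>i. ((\<lambda>s. coeff (F s) i) has_real_derivative coeff dF i) (at s0))"

lemma pd_const: "pd (\<lambda>s. p) 0 s0"
  unfolding pd_def by (auto intro!: exI[of _ "degree p"] DERIV_const)

lemma pd_add:
  assumes "pd F dF s0" "pd Q dQ s0"
  shows "pd (\<lambda>s. F s + Q s) (dF + dQ) s0"
proof -
  obtain N where N: "\<forall>s. degree (F s) \<le> N" "degree dF \<le> N" using assms(1) unfolding pd_def by auto
  obtain M where M: "\<forall>s. degree (Q s) \<le> M" "degree dQ \<le> M" using assms(2) unfolding pd_def by auto
  have "\<forall>s. degree (F s + Q s) \<le> max N M"
    using N M by (metis degree_add_le max.coboundedI1 max.coboundedI2)
  moreover have "degree (dF + dQ) \<le> max N M"
    using N M by (metis degree_add_le max.coboundedI1 max.coboundedI2)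
  moreover have "((\<lambda>s. coeff (F s + Q s) i) has_real_derivative coeff (dF + dQ) i) (at s0)" for i
    using assms unfolding pd_def by (auto intro!: derivative_intros)
  ultimately show ?thesis unfolding pd_def by blast
qed

lemma pd_uminus:
  assumes "pd F dF s0"
  shows "pd (\<lambda>s. - F s) (- dF) s0"
  using assms unfolding pd_def by (auto intro!: derivative_intros)

lemma pd_diff:
  assumes "pd F dF s0" "pd Q dQ s0"
  shows "pd (\<lambda>s. F s - Q s) (dF - dQ) s0"
  using pd_add[OF assms(1) pd_uminus[OF assms(2)]] by simp

lemma pd_smult:
  assumes "pd F dF s0" "(c has_real_derivative c') (at s0)"
  shows "pd (\<lambda>s. smult (c s) (F s)) (smult (c s0) dF + smult c' (F s0)) s0"
proof -
  obtain N where N: "\<forall>s. degree (F s) \<le> N" "degree dF \<le> N" using assms(1) unfolding pd_def by auto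
  have "\<forall>s. degree (smult (c s) (F s)) \<le> N" using N by (metis degree_smult_le order_trans)
  moreover have "degree (smult (c s0) dF + smult c' (F s0)) \<le> N"
    using N by (metis degree_add_le degree_smult_le order_trans)
  moreover have "((\<lambda>s. coeff (smult (c s) (F s)) i) has_real_derivative coeff (smult (c s0) dF + smult c' (F s0)) i) (at s0)" for i
  proof -
    have "((\<lambda>s. c s * coeff (F s) i) has_real_derivative (c' * coeff (F s0) i + c s0 * coeff dF i)) (at s0)"
      using assms unfolding pd_def by (auto intro!: derivative_eq_intros)
    then show ?thesis by (simp add: algebra_simps)
  qed
  ultimately show ?thesis unfolding pd_def by blast
qed

lemma pd_sum:
  assumes "finite S" "\<And>l. l \<in> S \<Longrightarrow> pd (F l) (dF l) s0"
  shows "pd (\<lambda>s. \<Sum>l\<in>S. F l s) (\<Sum>l\<in>S. dF l) s0"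
  using assms
proof (induction S rule: finite_induct)
  case empty then show ?case using pd_const[of 0 s0] by simp
next
  case (insert x S)
  then show ?case using pd_add[of "F x" "dF x" s0 "\<lambda>s. \<Sum>l\<in>S. F l s" "\<Sum>l\<in>S. dF l"] by simp
qed

lemma pd_mult:
  assumes "pd F dF s0" "pd Q dQ s0"
  shows "pd (\<lambda>s. F s * Q s) (dF * Q s0 + F s0 * dQ) s0"
proof -
  obtain N where N: "\<forall>s. degree (F s) \<le> N" "degree dF \<le> N" using assms(1) unfolding pd_def by auto
  obtain M where M: "\<forall>s. degree (Q s) \<le> M" "degree dQ \<le> M" using assms(2) unfolding pd_def by auto
  have "\<forall>s. degree (F s * Q s) \<le> N + M" using N M by (metis add_mono degree_mult_le order_trans)
  moreover have "degree (dF * Q s0 + F s0 * dQ) \<le> N + M"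
    using N M by (metis add_mono degree_add_le degree_mult_le order_trans)
  moreover have "((\<lambda>s. coeff (F s * Q s) n) has_real_derivative coeff (dF * Q s0 + F s0 * dQ) n) (at s0)" for n
  proof -
    have dF: "\<And>i. ((\<lambda>s. coeff (F s) i) has_real_derivative coeff dF i) (at s0)"
      and dQ: "\<And>i. ((\<lambda>s. coeff (Q s) i) has_real_derivative coeff dQ i) (at s0)"
      using assms unfolding pd_def by auto
    have "((\<lambda>s. \<Sum>i\<le>n. coeff (F s) i * coeff (Q s) (n - i)) has_real_derivative
          (\<Sum>i\<le>n. coeff dF i * coeff (Q s0) (n - i) + coeff (F s0) i * coeff dQ (n - i))) (at s0)"
    proof (rule DERIV_sum)
      fix i show "((\<lambda>s. coeff (F s) i * coeff (Q s) (n - i)) has_real_derivative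
          (coeff dF i * coeff (Q s0) (n - i) + coeff (F s0) i * coeff dQ (n - i))) (at s0)"
        using DERIV_mult[OF dF[of i] dQ[of "n-i"]] by (simp add: mult.commute)
    qed
    then show ?thesis by (simp add: coeff_mult sum.distrib)
  qed
  ultimately show ?thesis unfolding pd_def by blast
qed

lemma pd_poly:
  assumes "pd F dF s0" "(g has_real_derivative g') (at s0)"
  shows "((\<lambda>s. poly (F s) (g s)) has_real_derivative (poly dF (g s0) + poly (pderiv (F s0)) (g s0) * g')) (at s0)"
proof -
  obtain N where N: "\<forall>s. degree (F s) \<le> N" "degree dF \<le> N" using assms(1) unfolding pd_def by auto
  have dF: "\<And>i. ((\<lambda>s. coeff (F s) i) has_real_derivative coeff dF i) (at s0)"
    using assms unfolding pd_def by auto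
  have eq: "poly (F s) (g s) = (\<Sum>i\<le>N. coeff (F s) i * (g s)^i)" for s
    using N by (intro poly_bound) auto
  have d1: "((\<lambda>s. \<Sum>i\<le>N. coeff (F s) i * (g s)^i) has_real_derivative
     (\<Sum>i\<le>N. coeff dF i * (g s0)^i + coeff (F s0) i * (of_nat i * (g s0)^(i - 1) * g'))) (at s0)"
  proof (rule DERIV_sum)
    fix i
    have pw: "((\<lambda>s. (g s)^i) has_real_derivative (of_nat i * (g' * (g s0)^(i - Suc 0)))) (at s0)"
      by (rule DERIV_power[OF assms(2)])
    show "((\<lambda>s. coeff (F s) i * (g s)^i) has_real_derivative
       (coeff dF i * (g s0)^i + coeff (F s0) i * (of_nat i * (g s0)^(i - 1) * g'))) (at s0)"
      using DERIV_mult[OF dF[of i] pw] by (simp add: algebra_simps)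
  qed
  have dp: "((\<lambda>x. \<Sum>i\<le>N. coeff (F s0) i * x^i) has_real_derivative
     (\<Sum>i\<le>N. coeff (F s0) i * (of_nat i * (g s0)^(i - 1)))) (at (g s0))"
  proof (rule DERIV_sum)
    fix i show "((\<lambda>x. coeff (F s0) i * x^i) has_real_derivative (coeff (F s0) i * (of_nat i * (g s0)^(i - 1)))) (at (g s0))"
      using DERIV_cmult[OF DERIV_pow[of i "g s0" UNIV], of "coeff (F s0) i"] by simp
  qed
  have dp2: "((\<lambda>x. \<Sum>i\<le>N. coeff (F s0) i * x^i) has_real_derivative poly (pderiv (F s0)) (g s0)) (at (g s0))"
  proof -
    have "(\<lambda>x. \<Sum>i\<le>N. coeff (F s0) i * x^i) = (\<lambda>x. poly (F s0) x)"
      using N by (intro ext poly_bound[symmetric]) auto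
    then show ?thesis by (simp add: poly_DERIV)
  qed
  have u: "(\<Sum>i\<le>N. coeff (F s0) i * (of_nat i * (g s0)^(i - 1))) = poly (pderiv (F s0)) (g s0)"
    using DERIV_unique[OF dp dp2] .
  have "(\<Sum>i\<le>N. coeff dF i * (g s0)^i + coeff (F s0) i * (of_nat i * (g s0)^(i - 1) * g'))
      = poly dF (g s0) + poly (pderiv (F s0)) (g s0) * g'"
    using N by (simp add: sum.distrib poly_bound[of dF N] u[symmetric] sum_distrib_right mult.assoc)
  then show ?thesis using d1 unfolding eq by simp
qed

lemma Lf_tj_eq:
  assumes j: "j \<in> {1..m}"
  shows "Lf m \<omega> (t(j:=s)) f = (\<omega> 0 * G f + (\<Sum>k\<in>{1..m}-{j}. \<omega> k * H f (t k))) + \<omega> j * H f s"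
proof -
  have "(\<Sum>k=1..m. \<omega> k * H f ((t(j:=s)) k)) = \<omega> j * H f s + (\<Sum>k\<in>{1..m}-{j}. \<omega> k * H f ((t(j:=s)) k))"
    using j by (subst sum.remove[of _ j]) auto
  also have "(\<Sum>k\<in>{1..m}-{j}. \<omega> k * H f ((t(j:=s)) k)) = (\<Sum>k\<in>{1..m}-{j}. \<omega> k * H f (t k))"
    by (rule sum.cong) auto
  finally show ?thesis unfolding Lf_expand by simp
qed

lemma Lf_tj_deriv:
  assumes j: "j \<in> {1..m}"
  shows "((\<lambda>s. Lf m \<omega> (t(j:=s)) f) has_real_derivative (- \<omega> j * (poly f s0 * exp (-(s0^2))))) (at s0)"
proof -
  have "((\<lambda>s. (\<omega> 0 * G f + (\<Sum>k\<in>{1..m}-{j}. \<omega> k * H f (t k))) + \<omega> j * H f s) has_real_derivative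
      (0 + \<omega> j * (- (poly f s0 * exp (-(s0^2)))))) (at s0)"
    by (intro DERIV_add DERIV_const DERIV_cmult H_deriv)
  then show ?thesis unfolding Lf_tj_eq[OF j] by simp
qed

lemma pd_Lf:
  assumes j: "j \<in> {1..m}" and p: "pd F dF (t j)"
  shows "((\<lambda>s. Lf m \<omega> (t(j:=s)) (F s)) has_real_derivative
     (Lf m \<omega> t dF - \<omega> j * (poly (F (t j)) (t j) * exp (-((t j)^2))))) (at (t j))"
proof -
  obtain N where N: "\<forall>s. degree (F s) \<le> N" "degree dF \<le> N" using p unfolding pd_def by auto
  have dF: "\<And>i. ((\<lambda>s. coeff (F s) i) has_real_derivative coeff dF i) (at (t j))"
    using p unfolding pd_def by auto
  have eq: "Lf m \<omega> (t(j:=s)) (F s) = (\<Sum>i\<le>N. coeff (F s) i * Lf m \<omega> (t(j:=s)) (monom 1 i))" for s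
    using N by (intro Lf_moments) auto
  have d: "((\<lambda>s. \<Sum>i\<le>N. coeff (F s) i * Lf m \<omega> (t(j:=s)) (monom 1 i)) has_real_derivative
     (\<Sum>i\<le>N. coeff dF i * Lf m \<omega> (t(j:=t j)) (monom 1 i) + coeff (F (t j)) i * (- \<omega> j * (poly (monom 1 i) (t j) * exp (-((t j)^2)))))) (at (t j))"
  proof (rule DERIV_sum)
    fix i
    have lf: "((\<lambda>s. Lf m \<omega> (t(j:=s)) (monom 1 i)) has_real_derivative (- \<omega> j * (poly (monom 1 i) (t j) * exp (-((t j)^2))))) (at (t j))"
      by (rule Lf_tj_deriv[OF j])
    show "((\<lambda>s. coeff (F s) i * Lf m \<omega> (t(j:=s)) (monom 1 i)) has_real_derivative
     (coeff dF i * Lf m \<omega> (t(j:=t j)) (monom 1 i) + coeff (F (t j)) i * (- \<omega> j * (poly (monom 1 i) (t j) * exp (-((t j)^2)))))) (at (t j))"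
      using DERIV_mult[OF dF[of i] lf] by (simp add: algebra_simps)
  qed
  have "(\<Sum>i\<le>N. coeff dF i * Lf m \<omega> (t(j:=t j)) (monom 1 i) + coeff (F (t j)) i * (- \<omega> j * (poly (monom 1 i) (t j) * exp (-((t j)^2)))))
     = Lf m \<omega> t dF - \<omega> j * (poly (F (t j)) (t j) * exp (-((t j)^2)))"
  proof -
    have a: "(\<Sum>i\<le>N. coeff dF i * Lf m \<omega> (t(j:=t j)) (monom 1 i)) = Lf m \<omega> t dF"
      using Lf_moments[OF N(2), of m \<omega> t] by simp
    have b: "(\<Sum>i\<le>N. coeff (F (t j)) i * (- \<omega> j * (poly (monom 1 i) (t j) * exp (-((t j)^2)))))
       = - \<omega> j * exp (-((t j)^2)) * poly (F (t j)) (t j)"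
      using N by (simp add: poly_bound[of "F (t j)" N] poly_monom sum_distrib_left algebra_simps)
    show ?thesis unfolding sum.distrib a b by (simp add: algebra_simps)
  qed
  then show ?thesis using d unfolding eq by simp
qed


lemma gs_pd:
  assumes pdf: "posdef m \<omega> t" and j: "j \<in> {1..m}"
  shows "\<exists>dF. pd (\<lambda>s. gs m \<omega> (t(j:=s)) N) dF (t j)"
proof (induction N rule: less_induct)
  case (less N)
  show ?case
  proof (cases N)
    case 0 then show ?thesis using pd_const[of 1 "t j"] by auto
  next
    case (Suc M)
    define g where "g l s = gs m \<omega> (t(j:=s)) l" for l s
    define a where "a l s = Lf m \<omega> (t(j:=s)) (monom 1 (Suc M) * g l s)" for l s
    define b where "b l s = Lf m \<omega> (t(j:=s)) (g l s * g l s)" for l s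
    have "\<forall>l\<in>{..M}. \<exists>d. pd (g l) d (t j)"
    proof
      fix l assume "l \<in> {..M}"
      then have "l < N" using Suc by simp
      then show "\<exists>d. pd (g l) d (t j)" using less.IH[of l] unfolding g_def by blast
    qed
    then obtain D where D: "\<And>l. l \<in> {..M} \<Longrightarrow> pd (g l) (D l) (t j)" by metis
    have g0: "g l (t j) = gs m \<omega> t l" for l by (simp add: g_def)
    have pdq: "pd (\<lambda>s. smult (a l s / b l s) (g l s)) (smult (a l (t j) / b l (t j)) (D l) + smult c' (g l (t j))) (t j)"
      if l: "l \<in> {..M}" and c': "((\<lambda>s. a l s / b l s) has_real_derivative c') (at (t j))" for l c'
      by (rule pd_smult[OF D[OF l] c'])
    have ex: "\<exists>c'. ((\<lambda>s. a l s / b l s) has_real_derivative c') (at (t j))" if l: "l \<in> {..M}" for l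
    proof -
      have p1: "pd (\<lambda>s. monom 1 (Suc M) * g l s) (0 * g l (t j) + monom 1 (Suc M) * D l) (t j)"
        by (rule pd_mult[OF pd_const D[OF l]])
      have p2: "pd (\<lambda>s. g l s * g l s) (D l * g l (t j) + g l (t j) * D l) (t j)"
        by (rule pd_mult[OF D[OF l] D[OF l]])
      obtain da where da: "(a l has_real_derivative da) (at (t j))"
        using pd_Lf[where t=t and \<omega>=\<omega>, OF j p1] unfolding a_def by blast
      obtain db where db: "(b l has_real_derivative db) (at (t j))"
        using pd_Lf[where t=t and \<omega>=\<omega>, OF j p2] unfolding b_def by blast
      have "b l (t j) \<noteq> 0"
        using pdf gs_ne0[of m \<omega> t l] unfolding posdef_def b_def g0 by force
      then show ?thesis using DERIV_divide[OF da db] by blast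
    qed
    then obtain C where C: "\<And>l. l \<in> {..M} \<Longrightarrow> ((\<lambda>s. a l s / b l s) has_real_derivative C l) (at (t j))"
      by metis
    have ps: "pd (\<lambda>s. \<Sum>l\<in>{..M}. smult (a l s / b l s) (g l s))
        (\<Sum>l\<in>{..M}. smult (a l (t j) / b l (t j)) (D l) + smult (C l) (g l (t j))) (t j)"
      by (rule pd_sum) (auto intro!: pdq C)
    have pf: "pd (\<lambda>s. monom 1 (Suc M) - (\<Sum>l\<in>{..M}. smult (a l s / b l s) (g l s)))
        (0 - (\<Sum>l\<in>{..M}. smult (a l (t j) / b l (t j)) (D l) + smult (C l) (g l (t j)))) (t j)"
      by (rule pd_diff[OF pd_const ps])
    have e: "(\<lambda>s. gs m \<omega> (t(j:=s)) N) = (\<lambda>s. monom 1 (Suc M) - (\<Sum>l\<in>{..M}. smult (a l s / b l s) (g l s)))"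
      by (simp add: Suc a_def b_def g_def)
    show ?thesis unfolding e using pf by (rule exI)
  qed
qed


lemma ev_posdef:
  assumes g: "good m \<omega> t" and ps: "psum m \<omega>" and j: "j \<in> {1..m}"
  shows "eventually (\<lambda>s. posdef m \<omega> (t(j:=s))) (nhds (t j))"
  using good_ev[OF g ps j] by eventually_elim (rule good_posdef[OF _ ps])

lemma deriv_ev_zero:
  assumes "eventually (\<lambda>s. f s = 0) (nhds x)" "(f has_real_derivative D) (at x)"
  shows "D = 0"
proof -
  have "((\<lambda>s. 0::real) has_real_derivative D) (at x)"
    using assms(2) DERIV_cong_ev[OF refl assms(1) refl] by simp
  then show ?thesis using DERIV_const DERIV_unique by blast
qed

lemma OP_pack:
  assumes g: "good m \<omega> t" and ps: "psum m \<omega>" and j: "j \<in> {1..m}"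
  shows "\<exists>dF. (\<forall>i\<ge>N. coeff dF i = 0)
     \<and> (\<forall>q. (\<forall>i\<ge>N. coeff q i = 0) \<longrightarrow> Lf m \<omega> t (dF * q) = \<omega> j * exp (-((t j)^2)) * poly (OP m \<omega> t N) (t j) * poly q (t j))
     \<and> (\<forall>gg g'. (gg has_real_derivative g') (at (t j)) \<longrightarrow>
          ((\<lambda>s. poly (OP m \<omega> (t(j:=s)) N) (gg s)) has_real_derivative
             poly dF (gg (t j)) + poly (pderiv (OP m \<omega> t N)) (gg (t j)) * g') (at (t j)))
     \<and> ((\<lambda>s. hn m \<omega> (t(j:=s)) N) has_real_derivative - (\<omega> j * (poly (OP m \<omega> t N) (t j))^2 * exp (-((t j)^2)))) (at (t j))"
proof -
  have pdf: "posdef m \<omega> t" by (rule good_posdef[OF g ps])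
  define F where "F s = gs m \<omega> (t(j:=s)) N" for s
  obtain dF where dF: "pd F dF (t j)" using gs_pd[OF pdf j, of N] unfolding F_def by blast
  have F0: "F (t j) = OP m \<omega> t N" by (simp add: F_def OP_gs[OF pdf])
  have evp: "eventually (\<lambda>s. posdef m \<omega> (t(j:=s))) (nhds (t j))" by (rule ev_posdef[OF g ps j])
  have c1: "\<forall>i\<ge>N. coeff dF i = 0"
  proof (intro allI impI)
    fix i assume i: "N \<le> i"
    have "coeff (F s) i = (if i = N then 1 else 0)" for s
      using i by (auto simp: F_def gs_monic gs_coeff_high)
    then have "((\<lambda>s. coeff (F s) i) has_real_derivative 0) (at (t j))" by (simp add: DERIV_const)
    moreover have "((\<lambda>s. coeff (F s) i) has_real_derivative coeff dF i) (at (t j))"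
      using dF unfolding pd_def by auto
    ultimately show "coeff dF i = 0" using DERIV_unique by metis
  qed
  have c2: "Lf m \<omega> t (dF * q) = \<omega> j * exp (-((t j)^2)) * poly (OP m \<omega> t N) (t j) * poly q (t j)"
    if q: "\<forall>i\<ge>N. coeff q i = 0" for q
  proof -
    have p1: "pd (\<lambda>s. F s * q) (dF * q + F (t j) * 0) (t j)" by (rule pd_mult[OF dF pd_const])
    have d: "((\<lambda>s. Lf m \<omega> (t(j:=s)) (F s * q)) has_real_derivative
       (Lf m \<omega> t (dF * q + F (t j) * 0) - \<omega> j * (poly (F (t j) * q) (t j) * exp (-((t j)^2))))) (at (t j))"
      by (rule pd_Lf[where t=t and \<omega>=\<omega>, OF j p1])
    have "eventually (\<lambda>s. Lf m \<omega> (t(j:=s)) (F s * q) = 0) (nhds (t j))"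
      using evp by eventually_elim (simp add: F_def gs_orth q)
    from deriv_ev_zero[OF this d] show ?thesis by (simp add: F0 algebra_simps)
  qed
  have c3: "((\<lambda>s. poly (OP m \<omega> (t(j:=s)) N) (gg s)) has_real_derivative
             poly dF (gg (t j)) + poly (pderiv (OP m \<omega> t N)) (gg (t j)) * g') (at (t j))"
    if gg: "(gg has_real_derivative g') (at (t j))" for gg g'
  proof -
    have d: "((\<lambda>s. poly (F s) (gg s)) has_real_derivative poly dF (gg (t j)) + poly (pderiv (F (t j))) (gg (t j)) * g') (at (t j))"
      by (rule pd_poly[OF dF gg])
    have ev: "eventually (\<lambda>s. poly (OP m \<omega> (t(j:=s)) N) (gg s) = poly (F s) (gg s)) (nhds (t j))"
      using evp by eventually_elim (simp add: F_def OP_gs)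
    show ?thesis unfolding DERIV_cong_ev[OF refl ev refl] using d unfolding F0 .
  qed
  have c4: "((\<lambda>s. hn m \<omega> (t(j:=s)) N) has_real_derivative - (\<omega> j * (poly (OP m \<omega> t N) (t j))^2 * exp (-((t j)^2)))) (at (t j))"
  proof -
    have p1: "pd (\<lambda>s. F s * F s) (dF * F (t j) + F (t j) * dF) (t j)" by (rule pd_mult[OF dF dF])
    have d: "((\<lambda>s. Lf m \<omega> (t(j:=s)) (F s * F s)) has_real_derivative
       (Lf m \<omega> t (dF * F (t j) + F (t j) * dF) - \<omega> j * (poly (F (t j) * F (t j)) (t j) * exp (-((t j)^2))))) (at (t j))"
      by (rule pd_Lf[where t=t and \<omega>=\<omega>, OF j p1])
    have z: "Lf m \<omega> t (dF * F (t j) + F (t j) * dF) = 0"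
    proof -
      have "Lf m \<omega> t (F (t j) * dF) = 0" unfolding F0 OP_gs[OF pdf] by (rule gs_orth[OF pdf c1])
      then show ?thesis unfolding Lf_add by (simp add: mult.commute)
    qed
    have ev: "eventually (\<lambda>s. hn m \<omega> (t(j:=s)) N = Lf m \<omega> (t(j:=s)) (F s * F s)) (nhds (t j))"
      using evp by eventually_elim (simp add: F_def hn_gs)
    have e2: "(Lf m \<omega> t (dF * F (t j) + F (t j) * dF) - \<omega> j * (poly (F (t j) * F (t j)) (t j) * exp (-((t j)^2))))
       = - (\<omega> j * (poly (OP m \<omega> t N) (t j))^2 * exp (-((t j)^2)))"
      by (simp only: z) (simp add: F0 power2_eq_square)
    show ?thesis unfolding DERIV_cong_ev[OF refl ev refl] using d unfolding e2 .
  qed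
  show ?thesis using c1 c2 c3 c4 by blast
qed


context
  fixes m :: nat and \<omega> t :: "nat \<Rightarrow> real"
  assumes pdf: "posdef m \<omega> t"
begin

lemma OP_orth: "\<forall>i\<ge>N. coeff q i = 0 \<Longrightarrow> Lf m \<omega> t (OP m \<omega> t N * q) = 0"
  using gs_orth[OF pdf] by (simp add: OP_gs[OF pdf])
lemma OP_top: "\<forall>i>N. coeff q i = 0 \<Longrightarrow> Lf m \<omega> t (OP m \<omega> t N * q) = coeff q N * hn m \<omega> t N"
  using gs_top[OF pdf] by (simp add: OP_gs[OF pdf] hn_gs[OF pdf])
lemma OP_monic: "coeff (OP m \<omega> t N) N = 1"
  by (simp add: OP_gs[OF pdf] gs_monic)
lemma OP_high: "N < i \<Longrightarrow> coeff (OP m \<omega> t N) i = 0"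
  by (simp add: OP_gs[OF pdf] gs_coeff_high)

lemma zero_test:
  assumes "\<forall>i\<ge>N. coeff E i = 0" "\<And>q. \<forall>i\<ge>N. coeff q i = 0 \<Longrightarrow> Lf m \<omega> t (E * q) = 0"
  shows "E = 0"
  using assms(2)[OF assms(1)] pdf unfolding posdef_def by force

lemma coeff_pderiv_high: "\<forall>i\<ge>N. coeff q i = 0 \<Longrightarrow> \<forall>i\<ge>N. coeff (pderiv q) i = 0"
  by (simp add: coeff_pderiv)

lemma x_mult: "[:0,1:] * (q::real poly) = pCons 0 q"
  by simp

lemma ibp_split: "Lf m \<omega> t (pderiv p * q) = - (\<Sum>k=1..m. \<omega> k * (poly (p*q) (t k) * exp (-((t k)^2))))
     - Lf m \<omega> t (p * pderiv q) + 2 * Lf m \<omega> t (pCons 0 (p * q))"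
proof -
  have "ibp (p*q) = pderiv p * q + p * pderiv q - smult 2 (pCons 0 (p * q))"
    by (simp add: ibp_def pderiv_mult x_mult)
  then have "Lf m \<omega> t (ibp (p*q)) = Lf m \<omega> t (pderiv p * q + p * pderiv q - smult 2 (pCons 0 (p * q)))"
    by simp
  also have "\<dots> = Lf m \<omega> t (pderiv p * q) + Lf m \<omega> t (p * pderiv q) - 2 * Lf m \<omega> t (pCons 0 (p * q))"
    by (simp only: Lf_add Lf_diff Lf_smult)
  finally have "Lf m \<omega> t (ibp (p*q)) = Lf m \<omega> t (pderiv p * q) + Lf m \<omega> t (p * pderiv q) - 2 * Lf m \<omega> t (pCons 0 (p * q))" .
  then show ?thesis using Lf_ibp[of m \<omega> t "p*q"] by simp
qed

lemma Lf_E_expand: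
  "Lf m \<omega> t (((\<Sum>j=1..m. dP j) + pderiv P - smult c Pm) * q)
     = (\<Sum>j=1..m. Lf m \<omega> t (dP j * q)) + Lf m \<omega> t (pderiv P * q) - c * Lf m \<omega> t (Pm * q)"
  by (simp only: distrib_right left_diff_distrib sum_distrib_right Lf_add Lf_diff Lf_smult Lf_sum mult_smult_left)

lemma pCons_high: "\<forall>i\<ge>N. coeff q i = 0 \<Longrightarrow> \<forall>i>N. coeff (pCons 0 q) i = 0"
  by (auto simp: coeff_pCons split: nat.split)

lemma identA:
  fixes n' :: nat and dP :: "nat \<Rightarrow> real poly"
  assumes dc: "\<forall>j\<in>{1..m}. \<forall>i\<ge>Suc n'. coeff (dP j) i = 0"
    and dL: "\<forall>j\<in>{1..m}. \<forall>q::real poly. (\<forall>i\<ge>Suc n'. coeff q i = 0) \<longrightarrow> Lf m \<omega> t (dP j * q) = \<omega> j * exp (-((t j)^2)) * poly (OP m \<omega> t (Suc n')) (t j) * poly q (t j)"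
  shows "(\<Sum>j=1..m. dP j) + pderiv (OP m \<omega> t (Suc n')) = smult (2 * hn m \<omega> t (Suc n') / hn m \<omega> t n') (OP m \<omega> t n')"
proof -
  define P where "P = OP m \<omega> t (Suc n')"
  define Pm where "Pm = OP m \<omega> t n'"
  define h where "h = hn m \<omega> t (Suc n')"
  define hm where "hm = hn m \<omega> t n'"
  have hm: "hm > 0" unfolding hm_def by (rule hn_pos[OF pdf])
  define E where "E = (\<Sum>j=1..m. dP j) + pderiv P - smult (2 * h / hm) Pm"
  have "E = 0"
  proof (rule zero_test[of "Suc n'"])
    show "\<forall>i\<ge>Suc n'. coeff E i = 0"
      using dc by (auto simp: E_def coeff_sum coeff_pderiv P_def Pm_def OP_high)
  next
    fix q :: "real poly" assume q: "\<forall>i\<ge>Suc n'. coeff q i = 0"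
    have s1: "(\<Sum>j=1..m. Lf m \<omega> t (dP j * q)) = (\<Sum>k=1..m. \<omega> k * (poly (P*q) (t k) * exp (-((t k)^2))))"
      using dL q by (intro sum.cong) (auto simp: P_def)
    have s2: "Lf m \<omega> t (P * pderiv q) = 0"
      unfolding P_def by (rule OP_orth[OF coeff_pderiv_high[OF q]])
    have s3: "Lf m \<omega> t (pCons 0 (P * q)) = coeff q n' * h"
    proof -
      have "pCons 0 (P * q) = P * pCons 0 q" by simp
      moreover have "Lf m \<omega> t (P * pCons 0 q) = coeff (pCons 0 q) (Suc n') * h"
        unfolding P_def h_def by (rule OP_top[OF pCons_high[OF q]])
      ultimately show ?thesis by simp
    qed
    have s4: "Lf m \<omega> t (Pm * q) = coeff q n' * hm"
      unfolding Pm_def hm_def by (rule OP_top) (use q in auto)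
    show "Lf m \<omega> t (E * q) = 0"
      unfolding E_def Lf_E_expand ibp_split s1 s2 s3 s4 using hm by (simp add: field_simps)
  qed
  then show ?thesis unfolding E_def P_def h_def hm_def Pm_def by (simp add: algebra_simps)
qed

lemma R_coeffs:
  "\<forall>i\<ge>n'. coeff (pCons 0 (OP m \<omega> t n') - OP m \<omega> t (Suc n') - smult (coeff (pCons 0 (OP m \<omega> t n') - OP m \<omega> t (Suc n')) n') (OP m \<omega> t n')) i = 0"
proof (intro allI impI)
  fix i assume i: "n' \<le> i"
  then consider "i = n'" | "i = Suc n'" | "Suc n' < i" by linarith
  then show "coeff (pCons 0 (OP m \<omega> t n') - OP m \<omega> t (Suc n') - smult (coeff (pCons 0 (OP m \<omega> t n') - OP m \<omega> t (Suc n')) n') (OP m \<omega> t n')) i = 0"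
  proof cases
    case 1 then show ?thesis by (simp add: OP_monic)
  next
    case 2 then show ?thesis by (simp add: OP_monic OP_high)
  next
    case 3
    then obtain i' where "i = Suc i'" "Suc n' \<le> i'" by (cases i) auto
    then show ?thesis by (simp add: OP_high)
  qed
qed

lemma identB:
  fixes n' :: nat and dPm :: "nat \<Rightarrow> real poly"
  assumes dc: "\<forall>j\<in>{1..m}. \<forall>i\<ge>n'. coeff (dPm j) i = 0"
    and dL: "\<forall>j\<in>{1..m}. \<forall>q::real poly. (\<forall>i\<ge>n'. coeff q i = 0) \<longrightarrow> Lf m \<omega> t (dPm j * q) = \<omega> j * exp (-((t j)^2)) * poly (OP m \<omega> t n') (t j) * poly q (t j)"
  shows "(\<Sum>j=1..m. dPm j) + pderiv (OP m \<omega> t n') = smult 2 (pCons 0 (OP m \<omega> t n') - OP m \<omega> t (Suc n') - smult (coeff (pCons 0 (OP m \<omega> t n') - OP m \<omega> t (Suc n')) n') (OP m \<omega> t n'))"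
proof -
  define P where "P = OP m \<omega> t (Suc n')"
  define Pm where "Pm = OP m \<omega> t n'"
  define c' where "c' = coeff (pCons 0 Pm - P) n'"
  define R where "R = pCons 0 Pm - P - smult c' Pm"
  have Rc: "\<forall>i\<ge>n'. coeff R i = 0" using R_coeffs unfolding R_def c'_def P_def Pm_def .
  define E where "E = (\<Sum>j=1..m. dPm j) + pderiv Pm - smult 2 R"
  have "E = 0"
  proof (rule zero_test[of n'])
    show "\<forall>i\<ge>n'. coeff E i = 0"
      using dc Rc by (auto simp: E_def coeff_sum coeff_pderiv Pm_def OP_high)
  next
    fix q :: "real poly" assume q: "\<forall>i\<ge>n'. coeff q i = 0"
    have q': "\<forall>i\<ge>Suc n'. coeff q i = 0" using q by auto
    have s1: "(\<Sum>j=1..m. Lf m \<omega> t (dPm j * q)) = (\<Sum>k=1..m. \<omega> k * (poly (Pm*q) (t k) * exp (-((t k)^2))))"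
      using dL q by (intro sum.cong) (auto simp: Pm_def)
    have s2: "Lf m \<omega> t (Pm * pderiv q) = 0"
      unfolding Pm_def by (rule OP_orth[OF coeff_pderiv_high[OF q]])
    have s3: "Lf m \<omega> t (R * q) = Lf m \<omega> t (pCons 0 (Pm * q))"
    proof -
      have "R * q = pCons 0 (Pm * q) - P * q - smult c' (Pm * q)" by (simp add: R_def algebra_simps)
      moreover have "Lf m \<omega> t (P * q) = 0" unfolding P_def by (rule OP_orth[OF q'])
      moreover have "Lf m \<omega> t (Pm * q) = 0" unfolding Pm_def by (rule OP_orth[OF q])
      ultimately show ?thesis by (simp add: Lf_diff Lf_smult)
    qed
    show "Lf m \<omega> t (E * q) = 0"
      unfolding E_def Lf_E_expand ibp_split s1 s2 s3 by simp
  qed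
  then show ?thesis unfolding E_def R_def c'_def P_def Pm_def by (simp add: algebra_simps)
qed

lemma scalar_d:
  "(\<Sum>k=1..m. \<omega> k * (poly (OP m \<omega> t n' * OP m \<omega> t n') (t k) * exp (-((t k)^2))))
     = 2 * coeff (pCons 0 (OP m \<omega> t n') - OP m \<omega> t (Suc n')) n' * hn m \<omega> t n'"
proof -
  define P where "P = OP m \<omega> t (Suc n')"
  define Pm where "Pm = OP m \<omega> t n'"
  have hpd: "\<forall>i\<ge>n'. coeff (pderiv Pm) i = 0" by (simp add: coeff_pderiv Pm_def OP_high)
  have a: "Lf m \<omega> t (Pm * pderiv Pm) = 0" unfolding Pm_def by (rule OP_orth[OF hpd[unfolded Pm_def]])
  have b: "Lf m \<omega> t (Pm * (pCons 0 Pm - P)) = coeff (pCons 0 Pm - P) n' * hn m \<omega> t n'"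
    unfolding Pm_def
  proof (rule OP_top, intro allI impI)
    fix i assume "n' < i"
    then consider "i = Suc n'" | "Suc n' < i" by linarith
    then show "coeff (pCons 0 (OP m \<omega> t n') - P) i = 0"
    proof cases
      case 1 then show ?thesis by (simp add: P_def OP_monic)
    next
      case 2
      then obtain i' where "i = Suc i'" "Suc n' \<le> i'" by (cases i) auto
      then show ?thesis by (simp add: OP_high P_def)
    qed
  qed
  have c: "Lf m \<omega> t (P * Pm) = 0" unfolding P_def by (rule OP_orth) (simp add: Pm_def OP_high)
  have "Lf m \<omega> t (pCons 0 (Pm * Pm)) = Lf m \<omega> t (Pm * (pCons 0 Pm - P)) + Lf m \<omega> t (P * Pm)"
  proof -
    have "pCons 0 (Pm * Pm) = Pm * (pCons 0 Pm - P) + P * Pm" by (simp add: algebra_simps)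
    then show ?thesis by (simp add: Lf_add)
  qed
  then have d: "Lf m \<omega> t (pCons 0 (Pm * Pm)) = coeff (pCons 0 Pm - P) n' * hn m \<omega> t n'"
    using b c by simp
  have "Lf m \<omega> t (pderiv Pm * Pm) = 0" using a by (simp add: mult.commute)
  then have "0 = - (\<Sum>k=1..m. \<omega> k * (poly (Pm*Pm) (t k) * exp (-((t k)^2)))) - 0 + 2 * (coeff (pCons 0 Pm - P) n' * hn m \<omega> t n')"
    using ibp_split[of Pm Pm] a d by simp
  then show ?thesis unfolding P_def Pm_def by (simp add: algebra_simps)
qed

lemma scalar_e:
  "(\<Sum>k=1..m. \<omega> k * (poly (OP m \<omega> t (Suc n') * OP m \<omega> t n') (t k) * exp (-((t k)^2))))
     = 2 * hn m \<omega> t (Suc n') - real (Suc n') * hn m \<omega> t n'"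
proof -
  define P where "P = OP m \<omega> t (Suc n')"
  define Pm where "Pm = OP m \<omega> t n'"
  have a: "Lf m \<omega> t (Pm * pderiv P) = coeff (pderiv P) n' * hn m \<omega> t n'"
    unfolding Pm_def by (rule OP_top) (simp add: coeff_pderiv P_def OP_high)
  have a': "coeff (pderiv P) n' = real (Suc n')" by (simp add: coeff_pderiv P_def OP_monic)
  have b: "Lf m \<omega> t (P * pderiv Pm) = 0" unfolding P_def by (rule OP_orth) (simp add: coeff_pderiv Pm_def OP_high)
  have c: "Lf m \<omega> t (P * pCons 0 Pm) = coeff (pCons 0 Pm) (Suc n') * hn m \<omega> t (Suc n')"
    unfolding P_def by (rule OP_top) (auto simp: coeff_pCons Pm_def OP_high split: nat.split)
  have c': "coeff (pCons 0 Pm) (Suc n') = 1" by (simp add: Pm_def OP_monic)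
  have d: "Lf m \<omega> t (pCons 0 (P * Pm)) = hn m \<omega> t (Suc n')"
  proof -
    have "pCons 0 (P * Pm) = P * pCons 0 Pm" by simp
    then show ?thesis using c c' by simp
  qed
  have "Lf m \<omega> t (pderiv P * Pm) = real (Suc n') * hn m \<omega> t n'" using a a' by (simp add: mult.commute)
  then have "real (Suc n') * hn m \<omega> t n' = - (\<Sum>k=1..m. \<omega> k * (poly (P*Pm) (t k) * exp (-((t k)^2)))) - 0 + 2 * hn m \<omega> t (Suc n')"
    using ibp_split[of P Pm] b d by simp
  then show ?thesis unfolding P_def Pm_def by simp
qed

end


lemma deriv_R_form:
  assumes gg: "(gg has_real_derivative dg) (at x)" and pp: "(pp has_real_derivative dp) (at x)"
    and hh: "(hh has_real_derivative dh) (at x)" and hx: "hh x \<noteq> 0"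
  shows "((\<lambda>s. c * exp (- ((gg s)^2)) * (pp s)^2 / hh s) has_real_derivative
     c * (exp (- ((gg x)^2)) * (- 2 * gg x * dg) * (pp x)^2 / hh x + exp (- ((gg x)^2)) * 2 * pp x * dp / hh x
          - exp (- ((gg x)^2)) * (pp x)^2 * dh / (hh x)^2)) (at x)"
proof -
  have e: "((\<lambda>s. exp (- ((gg s)^2))) has_real_derivative exp (- ((gg x)^2)) * (- (of_nat 2 * (dg * gg x ^ (2 - Suc 0))))) (at x)"
    by (rule DERIV_fun_exp[OF DERIV_minus[OF DERIV_power[OF gg]]])
  show ?thesis
    by (rule DERIV_cong[OF DERIV_divide[OF DERIV_mult[OF DERIV_cmult[OF e] DERIV_power[OF pp]] hh hx]]) (use hx in \<open>simp add: field_simps power2_eq_square\<close>)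
qed

lemma deriv_r_form:
  assumes gg: "(gg has_real_derivative dg) (at x)" and pp: "(pp has_real_derivative dp) (at x)"
    and qq: "(qq has_real_derivative dq) (at x)"
    and hh: "(hh has_real_derivative dh) (at x)" and hx: "hh x \<noteq> 0"
  shows "((\<lambda>s. c * exp (- ((gg s)^2)) * pp s * qq s / hh s) has_real_derivative
     c * (exp (- ((gg x)^2)) * (- 2 * gg x * dg) * pp x * qq x / hh x + exp (- ((gg x)^2)) * (dp * qq x + pp x * dq) / hh x
          - exp (- ((gg x)^2)) * pp x * qq x * dh / (hh x)^2)) (at x)"
proof -
  have e: "((\<lambda>s. exp (- ((gg s)^2))) has_real_derivative exp (- ((gg x)^2)) * (- (of_nat 2 * (dg * gg x ^ (2 - Suc 0))))) (at x)"
    by (rule DERIV_fun_exp[OF DERIV_minus[OF DERIV_power[OF gg]]])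
  show ?thesis
    by (rule DERIV_cong[OF DERIV_divide[OF DERIV_mult[OF DERIV_mult[OF DERIV_cmult[OF e] pp] qq] hh hx]]) (use hx in \<open>simp add: field_simps power2_eq_square\<close>)
qed

lemma upd_deriv: "((\<lambda>s. (t(j:=s)) k) has_real_derivative (if k = j then 1 else 0)) (at x)"
  by (cases "k = j") (simp_all add: DERIV_ident DERIV_const)

definition OPP where
  "OPP m \<omega> t N j dF \<longleftrightarrow> (\<forall>i\<ge>N. coeff dF i = 0)
     \<and> (\<forall>q. (\<forall>i\<ge>N. coeff q i = 0) \<longrightarrow> Lf m \<omega> t (dF * q) = \<omega> j * exp (-((t j)^2)) * poly (OP m \<omega> t N) (t j) * poly q (t j))
     \<and> (\<forall>gg g'. (gg has_real_derivative g') (at (t j)) \<longrightarrow>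
          ((\<lambda>s. poly (OP m \<omega> (t(j:=s)) N) (gg s)) has_real_derivative
             poly dF (gg (t j)) + poly (pderiv (OP m \<omega> t N)) (gg (t j)) * g') (at (t j)))
     \<and> ((\<lambda>s. hn m \<omega> (t(j:=s)) N) has_real_derivative - (\<omega> j * (poly (OP m \<omega> t N) (t j))^2 * exp (-((t j)^2)))) (at (t j))"

lemma OPP_ex: "good m \<omega> t \<Longrightarrow> psum m \<omega> \<Longrightarrow> j \<in> {1..m} \<Longrightarrow> \<exists>dF. OPP m \<omega> t N j dF"
  unfolding OPP_def by (rule OP_pack)

lemma OPP_choice:
  assumes "good m \<omega> t" "psum m \<omega>"
  obtains dF where "\<forall>j\<in>{1..m}. OPP m \<omega> t N j (dF j)"
proof -
  have "\<forall>j\<in>{1..m}. \<exists>d. OPP m \<omega> t N j d" using OPP_ex[OF assms] by blast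
  then show ?thesis using bchoice that by metis
qed

theorem lemma3p5:
  fixes m n k :: nat and \<omega> t :: "nat \<Rightarrow> real"
  assumes "m \<ge> 1"
    and "\<forall>i j. 1 \<le> i \<longrightarrow> i < j \<longrightarrow> j \<le> m \<longrightarrow> t i < t j"
    and "\<forall>l\<le>m. (\<Sum>k=0..l. \<omega> k) \<ge> 0"
    and "\<exists>x. weight m \<omega> t x \<noteq> 0"
    and "n \<ge> 1"
    and "k \<in> {1..m}"
  shows "(\<exists>D. (\<forall>j\<in>{1..m}. ((\<lambda>s. Rnk m \<omega> (t(j := s)) n k) has_real_derivative D j) (at (t j)))
             \<and> (\<Sum>j=1..m. D j) = ((\<Sum>j=1..m. Rnk m \<omega> t n j) - 2 * t k) * Rnk m \<omega> t n k
                                  + 4 * rnk m \<omega> t n k)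
       \<and> (Rnk m \<omega> t n k \<noteq> 0 \<longrightarrow>
          (\<exists>D. (\<forall>j\<in>{1..m}. ((\<lambda>s. rnk m \<omega> (t(j := s)) n k) has_real_derivative D j) (at (t j)))
             \<and> (\<Sum>j=1..m. D j) = 2 * (rnk m \<omega> t n k)^2 / Rnk m \<omega> t n k
                   - ((\<Sum>j=1..m. rnk m \<omega> t n j) + real n) * Rnk m \<omega> t n k))"
proof -
  have ord: "ordered m t" using assms(2) unfolding ordered_def .
  have ps: "psum m \<omega>" using assms(3) unfolding psum_def .
  have g: "good m \<omega> t" using ord assms(4) unfolding good_def by blast
  have pdf: "posdef m \<omega> t" by (rule good_posdef[OF g ps])
  obtain n' where n: "n = Suc n'" using assms(5) by (cases n) auto
  have k: "k \<in> {1..m}" by (rule assms(6))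
  define P where "P = OP m \<omega> t (Suc n')"
  define Pm where "Pm = OP m \<omega> t n'"
  define h where "h = hn m \<omega> t (Suc n')"
  define hm where "hm = hn m \<omega> t n'"
  have hpos: "h > 0" unfolding h_def by (rule hn_pos[OF pdf])
  have hmpos: "hm > 0" unfolding hm_def by (rule hn_pos[OF pdf])
  obtain dP where dP: "\<forall>j\<in>{1..m}. OPP m \<omega> t (Suc n') j (dP j)" using OPP_choice[OF g ps] by blast
  obtain dPm where dPm: "\<forall>j\<in>{1..m}. OPP m \<omega> t n' j (dPm j)" using OPP_choice[OF g ps] by blast
  have iA: "(\<Sum>j=1..m. dP j) + pderiv P = smult (2 * h / hm) Pm"
    unfolding P_def h_def hm_def Pm_def
    by (rule identA[OF pdf]) (use dP in \<open>auto simp: OPP_def\<close>)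
  define c' where "c' = coeff (pCons 0 Pm - P) n'"
  have iB: "(\<Sum>j=1..m. dPm j) + pderiv Pm = smult 2 (pCons 0 Pm - P - smult c' Pm)"
    unfolding P_def Pm_def c'_def
    by (rule identB[OF pdf]) (use dPm in \<open>auto simp: OPP_def\<close>)
  have sd: "(\<Sum>j=1..m. \<omega> j * (poly (Pm * Pm) (t j) * exp (-((t j)^2)))) = 2 * c' * hm"
    unfolding P_def Pm_def c'_def hm_def by (rule scalar_d[OF pdf])
  have se: "(\<Sum>j=1..m. \<omega> j * (poly (P * Pm) (t j) * exp (-((t j)^2)))) = 2 * h - real (Suc n') * hm"
    unfolding P_def Pm_def h_def hm_def by (rule scalar_e[OF pdf])
  define \<delta> where "\<delta> j = (if k = j then 1 else (0::real))" for j
  define e where "e x = exp (-(x^2))" for x :: real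
  define p0 where "p0 = poly P (t k)"
  define q0 where "q0 = poly Pm (t k)"
  define P1 where "P1 = poly (pderiv P) (t k)"
  define Q1 where "Q1 = poly (pderiv Pm) (t k)"
  have sdelta: "(\<Sum>j=1..m. \<delta> j) = 1" using k by (simp add: \<delta>_def)
  have sdP: "(\<Sum>j=1..m. poly (dP j) (t k)) = 2 * h / hm * q0 - P1"
  proof -
    have "(\<Sum>j=1..m. dP j) = smult (2 * h / hm) Pm - pderiv P" using iA by (simp add: algebra_simps)
    then have "poly (\<Sum>j=1..m. dP j) (t k) = 2 * h / hm * q0 - P1" by (simp add: q0_def P1_def)
    then show ?thesis by (simp add: poly_sum)
  qed
  have sdPm: "(\<Sum>j=1..m. poly (dPm j) (t k)) = 2 * (t k * q0 - p0 - c' * q0) - Q1"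
  proof -
    have "(\<Sum>j=1..m. dPm j) = smult 2 (pCons 0 Pm - P - smult c' Pm) - pderiv Pm" using iB by (simp add: algebra_simps)
    then have "poly (\<Sum>j=1..m. dPm j) (t k) = 2 * (t k * q0 - p0 - c' * q0) - Q1" by (simp add: q0_def p0_def Q1_def)
    then show ?thesis by (simp add: poly_sum)
  qed
  have Rdef: "Rnk m \<omega> t n j = \<omega> j * e (t j) * (poly P (t j))^2 / h" for j
    by (simp add: Rnk_def n P_def h_def e_def)
  have rdef: "rnk m \<omega> t n j = \<omega> j * e (t j) * poly P (t j) * poly Pm (t j) / hm" for j
    by (simp add: rnk_def n P_def Pm_def hm_def e_def)

  have part1: "\<exists>D. (\<forall>j\<in>{1..m}. ((\<lambda>s. Rnk m \<omega> (t(j := s)) n k) has_real_derivative D j) (at (t j)))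
             \<and> (\<Sum>j=1..m. D j) = ((\<Sum>j=1..m. Rnk m \<omega> t n j) - 2 * t k) * Rnk m \<omega> t n k
                                  + 4 * rnk m \<omega> t n k"
  proof -
    define X1 where "X1 = \<omega> k * (e (t k) * (- 2 * t k) * p0^2 / h + e (t k) * 2 * p0 * P1 / h)"
    define Y1 where "Y1 = \<omega> k * e (t k) * 2 * p0 / h"
    define Z1 where "Z1 = \<omega> k * e (t k) * p0^2 / h^2"
    define D1 where "D1 j = X1 * \<delta> j + Y1 * poly (dP j) (t k) + Z1 * (\<omega> j * (poly P (t j))^2 * e (t j))" for j
    have der: "((\<lambda>s. Rnk m \<omega> (t(j := s)) n k) has_real_derivative D1 j) (at (t j))" if j: "j \<in> {1..m}" for j
    proof -
      have O: "OPP m \<omega> t (Suc n') j (dP j)" using dP j by blast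
      have O3: "\<forall>gg g'. (gg has_real_derivative g') (at (t j)) \<longrightarrow>
          ((\<lambda>s. poly (OP m \<omega> (t(j:=s)) (Suc n')) (gg s)) has_real_derivative
             poly (dP j) (gg (t j)) + poly (pderiv (OP m \<omega> t (Suc n'))) (gg (t j)) * g') (at (t j))"
        using O unfolding OPP_def by blast
      have hh: "((\<lambda>s. hn m \<omega> (t(j:=s)) (Suc n')) has_real_derivative - (\<omega> j * (poly (OP m \<omega> t (Suc n')) (t j))^2 * exp (-((t j)^2)))) (at (t j))"
        using O unfolding OPP_def by blast
      have gg: "((\<lambda>s. (t(j:=s)) k) has_real_derivative \<delta> j) (at (t j))" unfolding \<delta>_def by (rule upd_deriv)
      have pp: "((\<lambda>s. poly (OP m \<omega> (t(j:=s)) (Suc n')) ((t(j:=s)) k)) has_real_derivative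
          poly (dP j) ((t(j:=t j)) k) + poly (pderiv (OP m \<omega> t (Suc n'))) ((t(j:=t j)) k) * \<delta> j) (at (t j))"
        using O3[rule_format, OF gg] .
      have hx: "hn m \<omega> (t(j:=t j)) (Suc n') \<noteq> 0" using hpos by (simp add: h_def)
      note d = deriv_R_form[OF gg pp hh hx, of "\<omega> k"]
      show ?thesis unfolding Rnk_def n
        by (rule DERIV_cong[OF d]) (use hpos in \<open>simp add: D1_def X1_def Y1_def Z1_def e_def p0_def P1_def P_def h_def field_simps\<close>)
    qed
    have "(\<Sum>j=1..m. D1 j) = X1 * (\<Sum>j=1..m. \<delta> j) + Y1 * (\<Sum>j=1..m. poly (dP j) (t k)) + Z1 * (\<Sum>j=1..m. \<omega> j * (poly P (t j))^2 * e (t j))"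
      by (simp add: D1_def sum.distrib sum_distrib_left)
    also have "\<dots> = ((\<Sum>j=1..m. Rnk m \<omega> t n j) - 2 * t k) * Rnk m \<omega> t n k + 4 * rnk m \<omega> t n k"
    proof -
      have "(\<Sum>j=1..m. Rnk m \<omega> t n j) = (\<Sum>j=1..m. \<omega> j * (poly P (t j))^2 * e (t j)) / h"
        unfolding Rdef sum_divide_distrib by (intro sum.cong) (simp_all add: algebra_simps)
      then show ?thesis unfolding sdelta sdP Rdef rdef
        using hpos hmpos by (simp add: X1_def Y1_def Z1_def p0_def q0_def field_simps power2_eq_square)
    qed
    finally show ?thesis using der by blast
  qed

  have part2: "Rnk m \<omega> t n k \<noteq> 0 \<longrightarrow>
          (\<exists>D. (\<forall>j\<in>{1..m}. ((\<lambda>s. rnk m \<omega> (t(j := s)) n k) has_real_derivative D j) (at (t j)))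
             \<and> (\<Sum>j=1..m. D j) = 2 * (rnk m \<omega> t n k)^2 / Rnk m \<omega> t n k
                   - ((\<Sum>j=1..m. rnk m \<omega> t n j) + real n) * Rnk m \<omega> t n k)"
  proof
    assume Rne: "Rnk m \<omega> t n k \<noteq> 0"
    have wk: "\<omega> k \<noteq> 0" and p0nz: "p0 \<noteq> 0" using Rne by (auto simp: Rdef p0_def)
    have ek: "e (t k) > 0" by (simp add: e_def)
    define X2 where "X2 = \<omega> k * e (t k) * (- 2 * t k * p0 * q0 + P1 * q0 + p0 * Q1) / hm"
    define Y2 where "Y2 = \<omega> k * e (t k) * q0 / hm"
    define Y3 where "Y3 = \<omega> k * e (t k) * p0 / hm"
    define Z2 where "Z2 = \<omega> k * e (t k) * p0 * q0 / hm^2"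
    define D2 where "D2 j = X2 * \<delta> j + Y2 * poly (dP j) (t k) + Y3 * poly (dPm j) (t k) + Z2 * (\<omega> j * (poly Pm (t j))^2 * e (t j))" for j
    have der: "((\<lambda>s. rnk m \<omega> (t(j := s)) n k) has_real_derivative D2 j) (at (t j))" if j: "j \<in> {1..m}" for j
    proof -
      have O: "OPP m \<omega> t (Suc n') j (dP j)" using dP j by blast
      have Om: "OPP m \<omega> t n' j (dPm j)" using dPm j by blast
      have O3: "\<forall>gg g'. (gg has_real_derivative g') (at (t j)) \<longrightarrow>
          ((\<lambda>s. poly (OP m \<omega> (t(j:=s)) (Suc n')) (gg s)) has_real_derivative
             poly (dP j) (gg (t j)) + poly (pderiv (OP m \<omega> t (Suc n'))) (gg (t j)) * g') (at (t j))"
        using O unfolding OPP_def by blast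
      have Om3: "\<forall>gg g'. (gg has_real_derivative g') (at (t j)) \<longrightarrow>
          ((\<lambda>s. poly (OP m \<omega> (t(j:=s)) n') (gg s)) has_real_derivative
             poly (dPm j) (gg (t j)) + poly (pderiv (OP m \<omega> t n')) (gg (t j)) * g') (at (t j))"
        using Om unfolding OPP_def by blast
      have hh: "((\<lambda>s. hn m \<omega> (t(j:=s)) n') has_real_derivative - (\<omega> j * (poly (OP m \<omega> t n') (t j))^2 * exp (-((t j)^2)))) (at (t j))"
        using Om unfolding OPP_def by blast
      have gg: "((\<lambda>s. (t(j:=s)) k) has_real_derivative \<delta> j) (at (t j))" unfolding \<delta>_def by (rule upd_deriv)
      note pp = O3[rule_format, OF gg]
      note qq = Om3[rule_format, OF gg]
      have hx: "hn m \<omega> (t(j:=t j)) n' \<noteq> 0" using hmpos by (simp add: hm_def)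
      note d = deriv_r_form[OF gg pp qq hh hx, of "\<omega> k"]
      show ?thesis unfolding rnk_def n diff_Suc_1
        by (rule DERIV_cong[OF d]) (use hmpos in \<open>simp add: D2_def X2_def Y2_def Y3_def Z2_def e_def p0_def q0_def P1_def Q1_def P_def Pm_def hm_def field_simps\<close>)
    qed
    have sd': "(\<Sum>j=1..m. \<omega> j * (poly Pm (t j))^2 * e (t j)) = 2 * c' * hm"
      unfolding sd[symmetric] by (intro sum.cong) (simp_all add: e_def power2_eq_square)
    have se': "(\<Sum>j=1..m. rnk m \<omega> t n j) = (2 * h - real (Suc n') * hm) / hm"
      unfolding se[symmetric] rdef sum_divide_distrib by (intro sum.cong) (simp_all add: e_def)
    have "(\<Sum>j=1..m. D2 j) = X2 * (\<Sum>j=1..m. \<delta> j) + Y2 * (\<Sum>j=1..m. poly (dP j) (t k)) + Y3 * (\<Sum>j=1..m. poly (dPm j) (t k)) + Z2 * (\<Sum>j=1..m. \<omega> j * (poly Pm (t j))^2 * e (t j))"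
      by (simp add: D2_def sum.distrib sum_distrib_left)
    also have "\<dots> = 2 * (rnk m \<omega> t n k)^2 / Rnk m \<omega> t n k - ((\<Sum>j=1..m. rnk m \<omega> t n j) + real n) * Rnk m \<omega> t n k"
      unfolding se' unfolding sdelta sdP sdPm sd' Rdef rdef
      using hpos hmpos wk p0nz ek by (simp add: n X2_def Y2_def Y3_def Z2_def p0_def q0_def field_simps power2_eq_square)
    finally show "\<exists>D. (\<forall>j\<in>{1..m}. ((\<lambda>s. rnk m \<omega> (t(j := s)) n k) has_real_derivative D j) (at (t j)))
             \<and> (\<Sum>j=1..m. D j) = 2 * (rnk m \<omega> t n k)^2 / Rnk m \<omega> t n k
                   - ((\<Sum>j=1..m. rnk m \<omega> t n j) + real n) * Rnk m \<omega> t n k" using der by blast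
  qed
  show ?thesis using part1 part2 by blast
qed


end
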